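(* Let $G$ be a $k$-fold $\mathcal{R}_1$-circuit ($k\ge1$) with principal partition $\mathcal{A}$, let $x,y$ be two technicolour vertices of $G$, and let $G*v$ be the cone of $G$ over a new vertex $v$. Then $vx$ and $vy$ belong to different parts of the principal partition of $G*v$ in $\mathcal{R}_2$.
   Context: For a graph $G=(V,E)$ and a generic $p:V\to\mathbb{R}^d$ (coordinates algebraically independent over $\mathbb{Q}$), the rigidity matrix has a row for each $uv\in E$ with $p(u)-p(v)$ in the $d$ columns of $u$, $p(v)-p(u)$ in those of $v$, zeros elsewhere; $\mathcal{R}_d$ is its row matroid, with rank $r_d$ ($\mathcal{R}_1$ is the graphic matroid). A set of edges is cyclic if it is a union of $\mathcal{R}_d$-circuits; $(V,D)$ is a $k$-fold $\mathcal{R}_d$-circuit if $D$ is cyclic and $r_d(D)=|D|-k$. Its principal partition is the partition $\{A_1,\dots,A_\ell\}$ of $D$ such that $\{D\setminus A_i\}$ is exactly the set of $(k-1)$-fold $\mathcal{R}_d$-circuits contained in $D$. A vertex is technicolour if it is incident with edges from at least two parts of the principal partition. The cone $G*v$ is obtained by adding a new vertex $v$ adjacent to every vertex of $G$; it is a $k$-fold $\mathcal{R}_2$-circuit. *)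

theory Defs
  imports Complex_Main
begin

text \<open>Graphs are given by a finite set of edges, each edge a 2-element set of vertices.
  A placement is p :: 'a => nat => real (p u i is the i-th coordinate of vertex u).\<close>

text \<open>A polynomial is a finitely supported coefficient map from exponent vectors to Q.\<close>
definition alg_indep_Q :: "'b set \<Rightarrow> ('b \<Rightarrow> real) \<Rightarrow> bool" where
  "alg_indep_Q I x \<longleftrightarrow>
     (\<forall>c :: ('b \<Rightarrow> nat) \<Rightarrow> real.
        finite {m. c m \<noteq> 0} \<and> (\<forall>m. c m \<in> \<rat>) \<and>
        (\<forall>m. c m \<noteq> 0 \<longrightarrow> (\<forall>j. j \<notin> I \<longrightarrow> m j = 0)) \<and>
        (\<Sum>m\<in>{m. c m \<noteq> 0}. c m * (\<Prod>j\<in>I. x j ^ m j)) = 0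
        \<longrightarrow> (\<forall>m. c m = 0))"

definition generic :: "nat \<Rightarrow> 'a set \<Rightarrow> ('a \<Rightarrow> nat \<Rightarrow> real) \<Rightarrow> bool" where
  "generic d V p \<longleftrightarrow> alg_indep_Q (V \<times> {..<d}) (\<lambda>(u, i). p u i)"

definition rig_row :: "('a \<Rightarrow> nat \<Rightarrow> real) \<Rightarrow> 'a set \<Rightarrow> 'a \<Rightarrow> nat \<Rightarrow> real" where
  "rig_row p e x i = (if x \<in> e then p x i - p (THE y. y \<in> e \<and> y \<noteq> x) i else 0)"

definition rows_indep :: "nat \<Rightarrow> 'a set \<Rightarrow> ('a \<Rightarrow> nat \<Rightarrow> real) \<Rightarrow> 'a set set \<Rightarrow> bool" where
  "rows_indep d V p S \<longleftrightarrow>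
     (\<forall>c :: 'a set \<Rightarrow> real.
        (\<forall>u\<in>V. \<forall>i<d. (\<Sum>e\<in>S. c e * rig_row p e u i) = 0) \<longrightarrow> (\<forall>e\<in>S. c e = 0))"

definition gen_p :: "nat \<Rightarrow> 'a set \<Rightarrow> 'a \<Rightarrow> nat \<Rightarrow> real" where
  "gen_p d V = (SOME p. generic d V p)"

definition Rindep :: "nat \<Rightarrow> 'a set \<Rightarrow> 'a set set \<Rightarrow> bool" where
  "Rindep d V S \<longleftrightarrow> finite S \<and> rows_indep d V (gen_p d V) S"

definition Rrank :: "nat \<Rightarrow> 'a set \<Rightarrow> 'a set set \<Rightarrow> nat" where
  "Rrank d V F = Max {card S | S. S \<subseteq> F \<and> Rindep d V S}"

definition Rcircuit :: "nat \<Rightarrow> 'a set \<Rightarrow> 'a set set \<Rightarrow> bool" where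
  "Rcircuit d V C \<longleftrightarrow> finite C \<and> \<not> Rindep d V C \<and> (\<forall>S. S \<subset> C \<longrightarrow> Rindep d V S)"

definition Rcyclic :: "nat \<Rightarrow> 'a set \<Rightarrow> 'a set set \<Rightarrow> bool" where
  "Rcyclic d V D \<longleftrightarrow> D = \<Union> {C. C \<subseteq> D \<and> Rcircuit d V C}"

definition kfold_circuit :: "nat \<Rightarrow> 'a set \<Rightarrow> 'a set set \<Rightarrow> nat \<Rightarrow> bool" where
  "kfold_circuit d V D k \<longleftrightarrow> finite D \<and> Rcyclic d V D \<and> Rrank d V D + k = card D"

definition principal_partition :: "nat \<Rightarrow> 'a set \<Rightarrow> 'a set set \<Rightarrow> 'a set set set \<Rightarrow> bool" where
  "principal_partition d V D P \<longleftrightarrow>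
     (let k = card D - Rrank d V D in
       \<Union> P = D \<and> (\<forall>A\<in>P. A \<noteq> {}) \<and>
       (\<forall>A\<in>P. \<forall>B\<in>P. A \<noteq> B \<longrightarrow> A \<inter> B = {}) \<and>
       {D - A | A. A \<in> P} = {D'. D' \<subseteq> D \<and> kfold_circuit d V D' (k - 1)})"

definition technicolour :: "'a set set set \<Rightarrow> 'a \<Rightarrow> bool" where
  "technicolour P x \<longleftrightarrow>
     (\<exists>A\<in>P. \<exists>B\<in>P. A \<noteq> B \<and> (\<exists>e\<in>A. x \<in> e) \<and> (\<exists>e\<in>B. x \<in> e))"

definition cone_edges :: "'a set set \<Rightarrow> 'a \<Rightarrow> 'a set set" where
  "cone_edges E v = E \<union> {{v, u} | u. u \<in> \<Union> E}"

end

theory Submission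
  imports Defs "HOL-Library.Function_Algebras" "HOL-Analysis.Finite_Cartesian_Product" "HOL-Analysis.Continuum_Not_Denumerable"
begin

definition mono_ev :: "'b set \<Rightarrow> ('b \<Rightarrow> real) \<Rightarrow> ('b \<Rightarrow> nat) \<Rightarrow> real" where
  "mono_ev I z m = (\<Prod>j\<in>I. z j ^ m j)"

definition polyfun :: "'b set \<Rightarrow> (('b \<Rightarrow> real) \<Rightarrow> real) \<Rightarrow> bool" where
  "polyfun I f \<longleftrightarrow> (\<exists>c::('b\<Rightarrow>nat)\<Rightarrow>real. finite {m. c m \<noteq> 0} \<and> (\<forall>m. c m \<in> \<rat>) \<and>
     (\<forall>m. c m \<noteq> 0 \<longrightarrow> (\<forall>j. j \<notin> I \<longrightarrow> m j = 0)) \<and>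
     (\<forall>z. f z = (\<Sum>m\<in>{m. c m \<noteq> 0}. c m * mono_ev I z m)))"

lemma polyfunI:
  assumes "finite S" "\<And>m. c m \<noteq> 0 \<Longrightarrow> m \<in> S" "\<And>m. c m \<in> \<rat>"
    "\<And>m j. c m \<noteq> 0 \<Longrightarrow> j \<notin> I \<Longrightarrow> m j = 0"
    "\<And>z. f z = (\<Sum>m\<in>S. c m * mono_ev I z m)"
  shows "polyfun I f"
proof -
  have fin: "finite {m. c m \<noteq> 0}"
    by (rule finite_subset[OF _ assms(1)]) (use assms(2) in blast)
  have eq: "\<forall>z. f z = (\<Sum>m\<in>{m. c m \<noteq> 0}. c m * mono_ev I z m)"
  proof
    fix z
    have "(\<Sum>m\<in>S. c m * mono_ev I z m) = (\<Sum>m\<in>{m. c m \<noteq> 0}. c m * mono_ev I z m)"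
      by (rule sum.mono_neutral_right[OF assms(1)]) (use assms(2) in blast, simp)
    then show "f z = (\<Sum>m\<in>{m. c m \<noteq> 0}. c m * mono_ev I z m)" by (simp only: assms(5))
  qed
  have "\<forall>m. c m \<in> \<rat>" using assms(3) by blast
  moreover have "\<forall>m. c m \<noteq> 0 \<longrightarrow> (\<forall>j. j \<notin> I \<longrightarrow> m j = 0)" using assms(4) by blast
  ultimately show ?thesis unfolding polyfun_def using fin eq by blast
qed

lemma polyfunD:
  assumes "polyfun I f"
  shows "\<exists>S c. finite S \<and> (\<forall>m. c m \<noteq> 0 \<longrightarrow> m \<in> S) \<and> (\<forall>m. c m \<in> \<rat>) \<and>
    (\<forall>m j. c m \<noteq> 0 \<longrightarrow> j \<notin> I \<longrightarrow> m j = 0) \<and> (\<forall>z. f z = (\<Sum>m\<in>S. c m * mono_ev I z m))"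
proof -
  obtain c where c: "finite {m. c m \<noteq> 0}" "\<forall>m. c m \<in> \<rat>"
     "\<forall>m. c m \<noteq> 0 \<longrightarrow> (\<forall>j. j \<notin> I \<longrightarrow> m j = 0)"
     "\<forall>z. f z = (\<Sum>m\<in>{m. c m \<noteq> 0}. c m * mono_ev I z m)"
    using assms unfolding polyfun_def by blast
  show ?thesis
    by (rule exI[of _ "{m. c m \<noteq> 0}"], rule exI[of _ c]) (use c in simp)
qed

lemma generic_nz:
  assumes "alg_indep_Q I z0" "polyfun I f" "f w \<noteq> 0"
  shows "f z0 \<noteq> 0"
proof
  assume f0: "f z0 = 0"
  from assms(2) obtain c where c: "finite {m. c m \<noteq> 0}" "\<forall>m. c m \<in> \<rat>"
     "\<forall>m. c m \<noteq> 0 \<longrightarrow> (\<forall>j. j \<notin> I \<longrightarrow> m j = 0)"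
     "\<forall>z. f z = (\<Sum>m\<in>{m. c m \<noteq> 0}. c m * mono_ev I z m)"
    unfolding polyfun_def by blast
  have "(\<Sum>m\<in>{m. c m \<noteq> 0}. c m * (\<Prod>j\<in>I. z0 j ^ m j)) = 0"
    using c(4) f0 by (simp add: mono_ev_def)
  then have "\<forall>m. c m = 0" using assms(1) c(1-3) unfolding alg_indep_Q_def by blast
  then have "f w = 0" using c(4) by simp
  then show False using assms(3) by simp
qed

lemma polyfun_const: "r \<in> \<rat> \<Longrightarrow> polyfun I (\<lambda>z. r)"
  by (rule polyfunI[where S="{\<lambda>_. 0}" and c="\<lambda>m. if m = (\<lambda>_. 0) then r else 0"])
     (auto simp: mono_ev_def split: if_splits)

lemma polyfun_var:
  assumes "finite I" "j \<in> I"
  shows "polyfun I (\<lambda>z. z j)"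
proof (rule polyfunI[where S="{\<lambda>i. if i = j then 1 else 0}" and c="\<lambda>m. if m = (\<lambda>i. if i = j then 1 else 0) then 1 else 0"])
  fix z :: "_ \<Rightarrow> real"
  have 1: "(\<Prod>i\<in>I-{j}. z i ^ (if i = j then 1 else 0)) = 1" by (rule prod.neutral) auto
  have "mono_ev I z (\<lambda>i. if i = j then 1 else 0) = z j * (\<Prod>i\<in>I-{j}. z i ^ (if i = j then 1 else 0))"
    unfolding mono_ev_def using assms by (simp add: prod.remove)
  then have "mono_ev I z (\<lambda>i. if i = j then 1 else 0) = z j" using 1 by simp
  then show "z j = (\<Sum>m\<in>{\<lambda>i. if i = j then 1 else 0}. (if m = (\<lambda>i. if i = j then 1 else 0) then 1 else 0) * mono_ev I z m)"
    by simp
qed (use assms in \<open>auto split: if_splits\<close>)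

lemma polyfun_add:
  assumes "polyfun I f" "polyfun I g"
  shows "polyfun I (\<lambda>z. f z + g z)"
proof -
  obtain S c where c0: "finite S" "\<forall>m. c m \<noteq> 0 \<longrightarrow> m \<in> S" "\<forall>m. c m \<in> \<rat>"
    "\<forall>m j. c m \<noteq> 0 \<longrightarrow> j \<notin> I \<longrightarrow> m j = 0" "\<forall>z. f z = (\<Sum>m\<in>S. c m * mono_ev I z m)"
    using polyfunD[OF assms(1)] by blast
  note c = c0(1) c0(2)[rule_format] c0(3)[rule_format] c0(4)[rule_format] c0(5)[rule_format]
  obtain T d where d0: "finite T" "\<forall>m. d m \<noteq> 0 \<longrightarrow> m \<in> T" "\<forall>m. d m \<in> \<rat>"
    "\<forall>m j. d m \<noteq> 0 \<longrightarrow> j \<notin> I \<longrightarrow> m j = 0" "\<forall>z. g z = (\<Sum>m\<in>T. d m * mono_ev I z m)"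
    using polyfunD[OF assms(2)] by blast
  note d = d0(1) d0(2)[rule_format] d0(3)[rule_format] d0(4)[rule_format] d0(5)[rule_format]
  show ?thesis
  proof (rule polyfunI[where S="S \<union> T" and c="\<lambda>m. c m + d m"])
    fix z
    have "(\<Sum>m\<in>S. c m * mono_ev I z m) = (\<Sum>m\<in>S \<union> T. c m * mono_ev I z m)"
      by (rule sum.mono_neutral_left) (use c(1) d(1) c(2) in auto)
    moreover have "(\<Sum>m\<in>T. d m * mono_ev I z m) = (\<Sum>m\<in>S \<union> T. d m * mono_ev I z m)"
      by (rule sum.mono_neutral_left) (use c(1) d(1) d(2) in auto)
    ultimately show "f z + g z = (\<Sum>m\<in>S \<union> T. (c m + d m) * mono_ev I z m)"
      by (simp only: c(5) d(5) sum.distrib distrib_right)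
  next
    show "finite (S \<union> T)" using c(1) d(1) by simp
  next
    fix m assume "c m + d m \<noteq> 0"
    then have "c m \<noteq> 0 \<or> d m \<noteq> 0" by auto
    then show "m \<in> S \<union> T" using c(2) d(2) by blast
  next
    fix m show "c m + d m \<in> \<rat>" using c(3) d(3) by (rule Rats_add)
  next
    fix m j assume "c m + d m \<noteq> 0" "j \<notin> I"
    then have "c m \<noteq> 0 \<or> d m \<noteq> 0" by auto
    then show "m j = 0" using c(4) d(4) \<open>j \<notin> I\<close> by blast
  qed
qed

lemma polyfun_uminus:
  assumes "polyfun I f"
  shows "polyfun I (\<lambda>z. - f z)"
proof -
  obtain S c where c0: "finite S" "\<forall>m. c m \<noteq> 0 \<longrightarrow> m \<in> S" "\<forall>m. c m \<in> \<rat>"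
    "\<forall>m j. c m \<noteq> 0 \<longrightarrow> j \<notin> I \<longrightarrow> m j = 0" "\<forall>z. f z = (\<Sum>m\<in>S. c m * mono_ev I z m)"
    using polyfunD[OF assms(1)] by blast
  note c = c0(1) c0(2)[rule_format] c0(3)[rule_format] c0(4)[rule_format] c0(5)[rule_format]
  show ?thesis
    by (rule polyfunI[where S=S and c="\<lambda>m. - c m"]) (use c in \<open>auto simp: sum_negf\<close>)
qed

lemma polyfun_diff:
  assumes "polyfun I f" "polyfun I g"
  shows "polyfun I (\<lambda>z. f z - g z)"
  using polyfun_add[OF assms(1) polyfun_uminus[OF assms(2)]] by simp

lemma mono_ev_add: "mono_ev I z (m1 + m2) = mono_ev I z m1 * mono_ev I z m2"
  unfolding mono_ev_def by (simp add: power_add prod.distrib)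

lemma polyfun_mult:
  fixes I :: "'b set"
  assumes "polyfun I f" "polyfun I g"
  shows "polyfun I (\<lambda>z. f z * g z)"
proof -
  obtain S c where c0: "finite S" "\<forall>m. c m \<noteq> 0 \<longrightarrow> m \<in> S" "\<forall>m. c m \<in> \<rat>"
    "\<forall>m j. c m \<noteq> 0 \<longrightarrow> j \<notin> I \<longrightarrow> m j = 0" "\<forall>z. f z = (\<Sum>m\<in>S. c m * mono_ev I z m)"
    using polyfunD[OF assms(1)] by blast
  note c = c0(1) c0(2)[rule_format] c0(3)[rule_format] c0(4)[rule_format] c0(5)[rule_format]
  obtain T d where d0: "finite T" "\<forall>m. d m \<noteq> 0 \<longrightarrow> m \<in> T" "\<forall>m. d m \<in> \<rat>"
    "\<forall>m j. d m \<noteq> 0 \<longrightarrow> j \<notin> I \<longrightarrow> m j = 0" "\<forall>z. g z = (\<Sum>m\<in>T. d m * mono_ev I z m)"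
    using polyfunD[OF assms(2)] by blast
  note d = d0(1) d0(2)[rule_format] d0(3)[rule_format] d0(4)[rule_format] d0(5)[rule_format]
  define S' where "S' = {m\<in>S. c m \<noteq> 0}"
  define T' where "T' = {m\<in>T. d m \<noteq> 0}"
  define h where "h = (\<lambda>(m1::'b\<Rightarrow>nat, m2). m1 + m2)"
  define U where "U = h ` (S' \<times> T')"
  define e where "e = (\<lambda>n. \<Sum>pr\<in>{pr \<in> S' \<times> T'. h pr = n}. c (fst pr) * d (snd pr))"
  have fin: "finite S'" "finite T'" using c(1) d(1) by (auto simp: S'_def T'_def)
  show ?thesis
  proof (rule polyfunI[where S=U and c=e])
    show "finite U" using fin by (simp add: U_def)
    fix n assume "e n \<noteq> 0"
    then have "{pr \<in> S' \<times> T'. h pr = n} \<noteq> {}" unfolding e_def by force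
    then obtain pr where "pr \<in> S' \<times> T'" "h pr = n" by blast
    then show "n \<in> U" unfolding U_def by blast
  next
    fix n show "e n \<in> \<rat>" unfolding e_def using c(3) d(3) by (intro Rats_sum Rats_mult) auto
  next
    fix n j assume "e n \<noteq> 0" "j \<notin> I"
    then have "{pr \<in> S' \<times> T'. h pr = n} \<noteq> {}" unfolding e_def by force
    then obtain pr where pr: "pr \<in> S' \<times> T'" "h pr = n" by blast
    then show "n j = 0" using c(4) d(4) \<open>j \<notin> I\<close> unfolding S'_def T'_def h_def
      by (auto simp: plus_fun_def split: prod.splits)
  next
    fix z
    have fz: "f z = (\<Sum>m\<in>S'. c m * mono_ev I z m)"
      unfolding c(5) S'_def by (rule sum.mono_neutral_right) (use c(1) in auto)
    have gz: "g z = (\<Sum>m\<in>T'. d m * mono_ev I z m)"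
      unfolding d(5) T'_def by (rule sum.mono_neutral_right) (use d(1) in auto)
    have "f z * g z = (\<Sum>m1\<in>S'. \<Sum>m2\<in>T'. (c m1 * d m2) * mono_ev I z (h (m1, m2)))"
      unfolding fz gz sum_product h_def by (simp add: mono_ev_add mult_ac)
    also have "\<dots> = (\<Sum>pr\<in>S' \<times> T'. (c (fst pr) * d (snd pr)) * mono_ev I z (h pr))"
      by (simp add: sum.cartesian_product case_prod_beta)
    also have "\<dots> = (\<Sum>n\<in>U. \<Sum>pr\<in>{pr \<in> S' \<times> T'. h pr = n}. (c (fst pr) * d (snd pr)) * mono_ev I z (h pr))"
      by (rule sum.group[symmetric]) (use fin in \<open>auto simp: U_def\<close>)
    also have "\<dots> = (\<Sum>n\<in>U. e n * mono_ev I z n)"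
      unfolding e_def sum_distrib_right by (intro sum.cong refl) auto
    finally show "f z * g z = (\<Sum>n\<in>U. e n * mono_ev I z n)" .
  qed
qed

lemma polyfun_numeral: "polyfun I (\<lambda>z. numeral n)"
  by (rule polyfun_const) simp

lemma polyfun_pow:
  assumes "polyfun I f" shows "polyfun I (\<lambda>z. f z ^ n)"
proof (induction n)
  case 0 then show ?case using polyfun_const[of 1 I] by simp
next
  case (Suc n) then show ?case using polyfun_mult[OF assms Suc] by simp
qed

lemmas polyfun_intros = polyfun_add polyfun_diff polyfun_mult polyfun_uminus polyfun_pow polyfun_var

lemma alg_indep_empty:
  fixes x :: "'b \<Rightarrow> real"
  shows "alg_indep_Q {} x"
  unfolding alg_indep_Q_def
proof (rule allI, rule impI)
  fix c :: "('b \<Rightarrow> nat) \<Rightarrow> real"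
  assume h: "finite {m. c m \<noteq> 0} \<and> (\<forall>m. c m \<in> \<rat>) \<and> (\<forall>m. c m \<noteq> 0 \<longrightarrow> (\<forall>j. j \<notin> {} \<longrightarrow> m j = 0)) \<and>
        (\<Sum>m\<in>{m. c m \<noteq> 0}. c m * (\<Prod>j\<in>{}. x j ^ m j)) = 0"
  have sub: "{m. c m \<noteq> 0} \<subseteq> {\<lambda>_. 0}" using h by auto
  show "\<forall>m. c m = 0"
  proof (rule ccontr)
    assume "\<not> (\<forall>m. c m = 0)"
    then obtain m0 where m0: "c m0 \<noteq> 0" by blast
    then have "m0 = (\<lambda>_. 0)" using sub by auto
    then have eq: "{m. c m \<noteq> 0} = {\<lambda>_. 0}" using sub m0 by auto
    have "(\<Sum>m\<in>{m. c m \<noteq> 0}. c m * (\<Prod>j\<in>{}. x j ^ m j)) = c (\<lambda>_. 0)" unfolding eq by simp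
    then show False using h m0 \<open>m0 = (\<lambda>_. 0)\<close> by simp
  qed
qed

definition coefset :: "'b set \<Rightarrow> (('b \<Rightarrow> nat) \<Rightarrow> real) set" where
  "coefset J = {c. finite {m. c m \<noteq> 0} \<and> (\<forall>m. c m \<in> \<rat>) \<and> (\<forall>m. c m \<noteq> 0 \<longrightarrow> (\<forall>i. i \<notin> J \<longrightarrow> m i = 0))}"

lemma countable_coefset:
  fixes J :: "'b set"
  assumes "finite J"
  shows "countable (coefset J)"
proof -
  define M where "M = {m :: 'b \<Rightarrow> nat. \<forall>i. i \<notin> J \<longrightarrow> m i = 0}"
  have "inj_on (\<lambda>m. restrict m J) M"
  proof (rule inj_onI)
    fix m1 m2 assume "m1 \<in> M" "m2 \<in> M" "restrict m1 J = restrict m2 J"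
    show "m1 = m2"
    proof
      fix i show "m1 i = m2 i"
      proof (cases "i \<in> J")
        case True then show ?thesis using \<open>restrict m1 J = restrict m2 J\<close> by (metis restrict_apply')
      next
        case False then show ?thesis using \<open>m1 \<in> M\<close> \<open>m2 \<in> M\<close> unfolding M_def by simp
      qed
    qed
  qed
  moreover have "(\<lambda>m. restrict m J) ` M \<subseteq> Pi\<^sub>E J (\<lambda>_. UNIV)" by auto
  moreover have "countable (Pi\<^sub>E J (\<lambda>_. UNIV :: nat set))"
    using assms by (intro countable_PiE) auto
  ultimately have cM: "countable M"
    using countable_image_inj_on countable_subset by metis
  have cMQ: "countable (M \<times> \<rat>)" using cM countable_rat by blast
  define G where "G = (\<lambda>c::('b\<Rightarrow>nat)\<Rightarrow>real. {(m, c m) | m. c m \<noteq> 0})"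
  have injG: "inj_on G (coefset J)"
  proof (rule inj_onI)
    fix c1 c2 assume "G c1 = G c2"
    show "c1 = c2"
    proof
      fix m
      show "c1 m = c2 m"
      proof (cases "c1 m = 0")
        case True
        then show ?thesis
        proof (cases "c2 m = 0")
          case False
          then have "(m, c2 m) \<in> G c2" unfolding G_def by blast
          then have "(m, c2 m) \<in> G c1" using \<open>G c1 = G c2\<close> by simp
          then show ?thesis using True False unfolding G_def by auto
        qed simp
      next
        case False
        then have "(m, c1 m) \<in> G c1" unfolding G_def by blast
        then have "(m, c1 m) \<in> G c2" using \<open>G c1 = G c2\<close> by simp
        then show ?thesis unfolding G_def by auto
      qed
    qed
  qed
  have "G ` coefset J \<subseteq> {A. finite A \<and> A \<subseteq> M \<times> \<rat>}"
  proof
    fix A assume "A \<in> G ` coefset J"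
    then obtain c where c: "c \<in> coefset J" "A = G c" by blast
    have "A = (\<lambda>m. (m, c m)) ` {m. c m \<noteq> 0}" unfolding c(2) G_def by blast
    then have "finite A" using c(1) unfolding coefset_def by simp
    moreover have "A \<subseteq> M \<times> \<rat>" using c(1) unfolding c(2) G_def coefset_def M_def by auto
    ultimately show "A \<in> {A. finite A \<and> A \<subseteq> M \<times> \<rat>}" by blast
  qed
  then have "countable (G ` coefset J)"
    using countable_Collect_finite_subset[OF cMQ] countable_subset by blast
  then show ?thesis using injG countable_image_inj_on by blast
qed

lemma alg_indep_insert:
  fixes I :: "'b set"
  assumes fin: "finite I" and jI: "j \<notin> I" and ind: "alg_indep_Q I x0"
  shows "\<exists>t. alg_indep_Q (insert j I) (x0(j := t))"
proof -
  define P where "P = (\<lambda>m::'b\<Rightarrow>nat. \<Prod>i\<in>I. x0 i ^ m i)"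
  define d where "d = (\<lambda>(c::('b\<Rightarrow>nat)\<Rightarrow>real) (k::nat). \<Sum>m\<in>{m. c m \<noteq> 0 \<and> m j = k}. c m * P m)"
  define nn where "nn = (\<lambda>c::('b\<Rightarrow>nat)\<Rightarrow>real. Max (insert 0 ((\<lambda>m. m j) ` {m. c m \<noteq> 0})))"
  define Bad where "Bad = (\<lambda>c. if (\<exists>k\<le>nn c. d c k \<noteq> 0) then {t. (\<Sum>k\<le>nn c. d c k * t ^ k) = 0} else {})"
  have finBad: "finite (Bad c)" for c
  proof (cases "\<exists>k\<le>nn c. d c k \<noteq> 0")
    case True
    then obtain k where "k \<le> nn c" "d c k \<noteq> 0" by blast
    then show ?thesis unfolding Bad_def using True polyfun_rootbound[of "d c" k "nn c"] by simp
  qed (auto simp: Bad_def)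
  have "countable (\<Union>c\<in>coefset (insert j I). Bad c)"
    using countable_coefset[of "insert j I"] fin finBad by (intro countable_UN) (auto intro: countable_finite)
  then have "(\<Union>c\<in>coefset (insert j I). Bad c) \<noteq> UNIV" using uncountable_UNIV_real by auto
  then obtain t where t: "t \<notin> (\<Union>c\<in>coefset (insert j I). Bad c)" by blast
  show ?thesis
  proof (rule exI[of _ t], unfold alg_indep_Q_def, rule allI, rule impI)
    fix c :: "('b\<Rightarrow>nat)\<Rightarrow>real"
    assume h: "finite {m. c m \<noteq> 0} \<and> (\<forall>m. c m \<in> \<rat>) \<and>
        (\<forall>m. c m \<noteq> 0 \<longrightarrow> (\<forall>i. i \<notin> insert j I \<longrightarrow> m i = 0)) \<and>
        (\<Sum>m\<in>{m. c m \<noteq> 0}. c m * (\<Prod>i\<in>insert j I. (x0(j := t)) i ^ m i)) = 0"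
    have cC: "c \<in> coefset (insert j I)" using h unfolding coefset_def by blast
    have finS: "finite {m. c m \<noteq> 0}" using h by blast
    have val: "(\<Sum>m\<in>{m. c m \<noteq> 0}. c m * (\<Prod>i\<in>insert j I. (x0(j := t)) i ^ m i))
        = (\<Sum>k\<le>nn c. d c k * t ^ k)"
    proof -
      have "(\<Sum>m\<in>{m. c m \<noteq> 0}. c m * (\<Prod>i\<in>insert j I. (x0(j := t)) i ^ m i))
          = (\<Sum>m\<in>{m. c m \<noteq> 0}. c m * P m * t ^ (m j))"
      proof (rule sum.cong[OF refl])
        fix m
        have "(\<Prod>i\<in>insert j I. (x0(j := t)) i ^ m i) = t ^ m j * (\<Prod>i\<in>I. (x0(j := t)) i ^ m i)"
          using fin jI by simp
        also have "(\<Prod>i\<in>I. (x0(j := t)) i ^ m i) = P m"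
          unfolding P_def using jI by (intro prod.cong) auto
        finally show "c m * (\<Prod>i\<in>insert j I. (x0(j := t)) i ^ m i) = c m * P m * t ^ m j" by simp
      qed
      also have "\<dots> = (\<Sum>k\<le>nn c. \<Sum>m\<in>{m \<in> {m. c m \<noteq> 0}. m j = k}. c m * P m * t ^ (m j))"
      proof (rule sum.group[symmetric, OF finS])
        show "(\<lambda>m. m j) ` {m. c m \<noteq> 0} \<subseteq> {..nn c}"
          unfolding nn_def using finS by (auto intro: Max_ge)
      qed simp
      also have "\<dots> = (\<Sum>k\<le>nn c. d c k * t ^ k)"
        unfolding d_def sum_distrib_right by (intro sum.cong refl) auto
      finally show ?thesis .
    qed
    have dz: "d c k = 0" if "k \<le> nn c" for k
    proof (rule ccontr)
      assume "d c k \<noteq> 0"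
      then have "t \<in> Bad c" unfolding Bad_def using that h val by auto
      then show False using t cC by blast
    qed
    have dz2: "d c k = 0" for k
    proof (cases "k \<le> nn c")
      case False
      have e: "{m. c m \<noteq> 0 \<and> m j = k} = {}"
      proof (rule ccontr)
        assume "{m. c m \<noteq> 0 \<and> m j = k} \<noteq> {}"
        then obtain m where "c m \<noteq> 0" "m j = k" by blast
        then have "k \<le> nn c" unfolding nn_def using finS by (auto intro!: Max_ge)
        then show False using False by simp
      qed
      show ?thesis unfolding d_def e by simp
    qed (rule dz)
    show "\<forall>m. c m = 0"
    proof
      fix m0 :: "'b \<Rightarrow> nat"
      define k where "k = m0 j"
      define ck where "ck = (\<lambda>m'::'b\<Rightarrow>nat. if m' j = 0 then c (m'(j := k)) else 0)"
      have supp: "{m'. ck m' \<noteq> 0} = (\<lambda>m. m(j := 0)) ` {m. c m \<noteq> 0 \<and> m j = k}"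
      proof
        show "{m'. ck m' \<noteq> 0} \<subseteq> (\<lambda>m. m(j := 0)) ` {m. c m \<noteq> 0 \<and> m j = k}"
        proof
          fix m' assume "m' \<in> {m'. ck m' \<noteq> 0}"
          then have "m' j = 0" "c (m'(j := k)) \<noteq> 0" unfolding ck_def by (auto split: if_splits)
          then show "m' \<in> (\<lambda>m. m(j := 0)) ` {m. c m \<noteq> 0 \<and> m j = k}"
            by (intro image_eqI[of _ _ "m'(j := k)"]) auto
        qed
      next
        show "(\<lambda>m. m(j := 0)) ` {m. c m \<noteq> 0 \<and> m j = k} \<subseteq> {m'. ck m' \<noteq> 0}"
        proof
          fix m' assume "m' \<in> (\<lambda>m. m(j := 0)) ` {m. c m \<noteq> 0 \<and> m j = k}"
          then obtain m where m: "c m \<noteq> 0" "m j = k" "m' = m(j := 0)" by blast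
          have "m'(j := k) = m" using m by auto
          then show "m' \<in> {m'. ck m' \<noteq> 0}" unfolding ck_def using m by auto
        qed
      qed
      have inj: "inj_on (\<lambda>m. m(j := 0)) {m. c m \<noteq> 0 \<and> m j = k}"
      proof (rule inj_onI)
        fix m1 m2 assume "m1 \<in> {m. c m \<noteq> 0 \<and> m j = k}" "m2 \<in> {m. c m \<noteq> 0 \<and> m j = k}" "m1(j := 0) = m2(j := 0)"
        then show "m1 = m2" by (metis (mono_tags, lifting) fun_upd_triv fun_upd_upd mem_Collect_eq)
      qed
      have "(\<Sum>m'\<in>{m'. ck m' \<noteq> 0}. ck m' * (\<Prod>i\<in>I. x0 i ^ m' i)) = d c k"
      proof -
        have "(\<Sum>m'\<in>{m'. ck m' \<noteq> 0}. ck m' * (\<Prod>i\<in>I. x0 i ^ m' i))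
            = (\<Sum>m\<in>{m. c m \<noteq> 0 \<and> m j = k}. ck (m(j := 0)) * (\<Prod>i\<in>I. x0 i ^ (m(j := 0)) i))"
          unfolding supp by (rule sum.reindex[OF inj, unfolded comp_def])
        also have "\<dots> = d c k"
          unfolding d_def P_def
        proof (intro sum.cong refl)
          fix m assume m: "m \<in> {m. c m \<noteq> 0 \<and> m j = k}"
          have "m(j := 0, j := k) = m" using m by auto
          then have "ck (m(j := 0)) = c m" unfolding ck_def by simp
          moreover have "(\<Prod>i\<in>I. x0 i ^ (m(j := 0)) i) = (\<Prod>i\<in>I. x0 i ^ m i)"
            using jI by (intro prod.cong) auto
          ultimately show "ck (m(j := 0)) * (\<Prod>i\<in>I. x0 i ^ (m(j := 0)) i) = c m * (\<Prod>i\<in>I. x0 i ^ m i)"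
            by simp
        qed
        finally show ?thesis .
      qed
      then have sum0: "(\<Sum>m'\<in>{m'. ck m' \<noteq> 0}. ck m' * (\<Prod>i\<in>I. x0 i ^ m' i)) = 0" using dz2 by simp
      have finck: "finite {m'. ck m' \<noteq> 0}" unfolding supp using finS by simp
      have ratck: "\<forall>m. ck m \<in> \<rat>" using h unfolding ck_def by auto
      have suppck: "\<forall>m. ck m \<noteq> 0 \<longrightarrow> (\<forall>i. i \<notin> I \<longrightarrow> m i = 0)"
      proof (intro allI impI)
        fix m' i assume "ck m' \<noteq> 0" "i \<notin> I"
        then have "m' j = 0" "c (m'(j := k)) \<noteq> 0" unfolding ck_def by (auto split: if_splits)
        show "m' i = 0"
        proof (cases "i = j")
          case True then show ?thesis using \<open>m' j = 0\<close> by simp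
        next
          case False
          then have "(m'(j := k)) i = 0" using h \<open>c (m'(j := k)) \<noteq> 0\<close> \<open>i \<notin> I\<close> by auto
          then show ?thesis using False by simp
        qed
      qed
      have "\<forall>m. ck m = 0" using ind finck ratck suppck sum0 unfolding alg_indep_Q_def by blast
      then have "ck (m0(j := 0)) = 0" by blast
      moreover have "m0(j := 0, j := k) = m0" unfolding k_def by simp
      ultimately show "c m0 = 0" unfolding ck_def by simp
    qed
  qed
qed

lemma alg_indep_exists:
  assumes "finite I" shows "\<exists>x. alg_indep_Q I x"
  using assms
proof (induction I rule: finite_induct)
  case empty then show ?case using alg_indep_empty by blast
next
  case (insert j I)
  then obtain x0 where "alg_indep_Q I x0" by blast
  then show ?case using alg_indep_insert[OF insert(1,2)] by blast
qed

lemma gen_p_generic: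
  assumes "finite V"
  shows "generic d V (gen_p d V)"
proof -
  obtain x where x: "alg_indep_Q (V \<times> {..<d}) x" using alg_indep_exists[of "V \<times> {..<d}"] assms by auto
  have "generic d V (\<lambda>u i. x (u, i))" unfolding generic_def using x by (simp add: case_prod_beta)
  then show ?thesis unfolding gen_p_def by (rule someI[of "generic d V"])
qed

definition scaleF :: "real \<Rightarrow> ('c \<Rightarrow> real) \<Rightarrow> ('c \<Rightarrow> real)" where
  "scaleF r f = (\<lambda>k. r * f k)"

lemma scaleF_apply[simp]: "scaleF r f k = r * f k" by (simp add: scaleF_def)

interpretation fv: vector_space scaleF
  by unfold_locales (auto simp: scaleF_def fun_eq_iff algebra_simps)

lemma sum_fun_apply: "(\<Sum>e\<in>S. f e) k = (\<Sum>e\<in>S. f e k)"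
proof (cases "finite S")
  case True then show ?thesis by (induction S rule: finite_induct) auto
qed simp

definition rowv :: "nat \<Rightarrow> 'a set \<Rightarrow> ('a \<Rightarrow> nat \<Rightarrow> real) \<Rightarrow> 'a set \<Rightarrow> ('a \<times> nat \<Rightarrow> real)" where
  "rowv d V p e = (\<lambda>(u, i). if u \<in> V \<and> i < d then rig_row p e u i else 0)"

lemma rows_indep_iff:
  assumes fin: "finite S"
  shows "rows_indep d V p S \<longleftrightarrow> inj_on (rowv d V p) S \<and> fv.independent (rowv d V p ` S)"
proof
  assume ri: "rows_indep d V p S"
  have inj: "inj_on (rowv d V p) S"
  proof (rule inj_onI, rule ccontr)
    fix e1 e2 assume e: "e1 \<in> S" "e2 \<in> S" "rowv d V p e1 = rowv d V p e2" "e1 \<noteq> e2"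
    define c where "c = (\<lambda>e. if e = e1 then 1 else if e = e2 then -1 else (0::real))"
    have "\<forall>u\<in>V. \<forall>i<d. (\<Sum>e\<in>S. c e * rig_row p e u i) = 0"
    proof (intro ballI allI impI)
      fix u i assume ui: "u \<in> V" "i < d"
      have "(\<Sum>e\<in>S. c e * rig_row p e u i) = (\<Sum>e\<in>{e1, e2}. c e * rig_row p e u i)"
        by (rule sum.mono_neutral_right) (use fin e in \<open>auto simp: c_def\<close>)
      also have "\<dots> = rig_row p e1 u i - rig_row p e2 u i" using e(4) by (simp add: c_def)
      also have "\<dots> = 0"
        using fun_cong[OF e(3), of "(u, i)"] ui by (simp add: rowv_def)
      finally show "(\<Sum>e\<in>S. c e * rig_row p e u i) = 0" .
    qed
    then have "c e1 = 0" using ri e(1) unfolding rows_indep_def by blast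
    then show False by (simp add: c_def)
  qed
  have "fv.independent (rowv d V p ` S)"
  proof (rule fv.independent_if_scalars_zero)
    show "finite (rowv d V p ` S)" using fin by simp
  next
    fix f x assume sum0: "(\<Sum>y\<in>rowv d V p ` S. scaleF (f y) y) = 0" and x: "x \<in> rowv d V p ` S"
    define c where "c = (\<lambda>e. f (rowv d V p e))"
    have "(\<Sum>y\<in>rowv d V p ` S. scaleF (f y) y) = (\<Sum>e\<in>S. scaleF (c e) (rowv d V p e))"
      unfolding c_def by (rule sum.reindex_cong[OF inj refl]) simp
    then have s0: "(\<Sum>e\<in>S. scaleF (c e) (rowv d V p e)) = 0" using sum0 by simp
    have "\<forall>u\<in>V. \<forall>i<d. (\<Sum>e\<in>S. c e * rig_row p e u i) = 0"
    proof (intro ballI allI impI)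
      fix u i assume ui: "u \<in> V" "i < d"
      have "(\<Sum>e\<in>S. scaleF (c e) (rowv d V p e)) (u, i) = 0" using s0 by simp
      then show "(\<Sum>e\<in>S. c e * rig_row p e u i) = 0" using ui by (simp add: sum_fun_apply rowv_def)
    qed
    then have "\<forall>e\<in>S. c e = 0" using ri unfolding rows_indep_def by blast
    then show "f x = 0" using x unfolding c_def by auto
  qed
  then show "inj_on (rowv d V p) S \<and> fv.independent (rowv d V p ` S)" using inj by blast
next
  assume h: "inj_on (rowv d V p) S \<and> fv.independent (rowv d V p ` S)"
  show "rows_indep d V p S"
    unfolding rows_indep_def
  proof (intro allI impI)
    fix c assume c: "\<forall>u\<in>V. \<forall>i<d. (\<Sum>e\<in>S. c e * rig_row p e u i) = 0"
    define g where "g = (\<lambda>y. c (the_inv_into S (rowv d V p) y))"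
    have "(\<Sum>y\<in>rowv d V p ` S. scaleF (g y) y) = (\<Sum>e\<in>S. scaleF (c e) (rowv d V p e))"
      unfolding g_def by (rule sum.reindex_cong[OF conjunct1[OF h] refl]) (simp add: the_inv_into_f_f[OF conjunct1[OF h]])
    also have "\<dots> = 0"
    proof -
      have "(\<Sum>e\<in>S. scaleF (c e) (rowv d V p e)) (a, b) = 0 (a, b)" for a b
        by (cases "a \<in> V \<and> b < d") (use c in \<open>auto simp: sum_fun_apply rowv_def\<close>)
      then show ?thesis by (simp only: fun_eq_iff split_paired_All) blast
    qed
    finally have s0: "(\<Sum>y\<in>rowv d V p ` S. scaleF (g y) y) = 0" .
    have "\<forall>y\<in>rowv d V p ` S. g y = 0"
      using h s0 fv.dependent_finite[of "rowv d V p ` S"] fin by auto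
    then show "\<forall>e\<in>S. c e = 0"
      unfolding g_def using the_inv_into_f_f[OF conjunct1[OF h]] by fastforce
  qed
qed

lemma Rindep_iff:
  "Rindep d V S \<longleftrightarrow> finite S \<and> inj_on (rowv d V (gen_p d V)) S \<and> fv.independent (rowv d V (gen_p d V) ` S)"
  unfolding Rindep_def using rows_indep_iff by blast

lemma Rindep_empty: "Rindep d V {}"
  unfolding Rindep_def rows_indep_def by simp

lemma rows_indep_subset:
  assumes "rows_indep d V p S" "T \<subseteq> S" "finite S"
  shows "rows_indep d V p T"
  unfolding rows_indep_def
proof (intro allI impI)
  fix c assume c: "\<forall>u\<in>V. \<forall>i<d. (\<Sum>e\<in>T. c e * rig_row p e u i) = 0"
  define c' where "c' = (\<lambda>e. if e \<in> T then c e else 0)"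
  have "\<forall>u\<in>V. \<forall>i<d. (\<Sum>e\<in>S. c' e * rig_row p e u i) = 0"
  proof (intro ballI allI impI)
    fix u i assume "u \<in> V" "i < d"
    have "(\<Sum>e\<in>S. c' e * rig_row p e u i) = (\<Sum>e\<in>T. c' e * rig_row p e u i)"
      by (rule sum.mono_neutral_right) (use assms in \<open>auto simp: c'_def\<close>)
    also have "\<dots> = (\<Sum>e\<in>T. c e * rig_row p e u i)" by (simp add: c'_def)
    finally show "(\<Sum>e\<in>S. c' e * rig_row p e u i) = 0" using c \<open>u \<in> V\<close> \<open>i < d\<close> by simp
  qed
  then have "\<forall>e\<in>S. c' e = 0" using assms(1) unfolding rows_indep_def by blast
  then show "\<forall>e\<in>T. c e = 0" using assms(2) unfolding c'_def by force
qed

lemma Rindep_subset: "Rindep d V S \<Longrightarrow> T \<subseteq> S \<Longrightarrow> Rindep d V T"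
  unfolding Rindep_def using rows_indep_subset[of d V "gen_p d V" S T] finite_subset[of T S] by blast

lemma Rrank_set_finite:
  assumes "finite F"
  shows "finite {card S | S. S \<subseteq> F \<and> Rindep d V S}"
proof -
  have "{card S | S. S \<subseteq> F \<and> Rindep d V S} \<subseteq> card ` Pow F" by auto
  then show ?thesis using assms finite_subset by blast
qed

lemma Rrank_ge:
  assumes "finite F" "S \<subseteq> F" "Rindep d V S"
  shows "card S \<le> Rrank d V F"
proof -
  have mem: "card S \<in> {card S | S. S \<subseteq> F \<and> Rindep d V S}" using assms(2,3) by blast
  show ?thesis unfolding Rrank_def by (rule Max_ge[OF Rrank_set_finite[OF assms(1)] mem])
qed

lemma Rrank_obtain:
  assumes "finite F"
  obtains S where "S \<subseteq> F" "Rindep d V S" "card S = Rrank d V F"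
proof -
  have ne: "{card S | S. S \<subseteq> F \<and> Rindep d V S} \<noteq> {}" using Rindep_empty by blast
  have "Rrank d V F \<in> {card S | S. S \<subseteq> F \<and> Rindep d V S}"
    unfolding Rrank_def using Max_in[OF Rrank_set_finite[OF assms] ne] .
  then obtain S where "Rrank d V F = card S" "S \<subseteq> F" "Rindep d V S" by blast
  then show ?thesis using that by simp
qed

lemma Rrank_le_card:
  assumes "finite F" shows "Rrank d V F \<le> card F"
proof -
  obtain S where S: "S \<subseteq> F" "Rindep d V S" "card S = Rrank d V F" using Rrank_obtain[OF assms] by blast
  show ?thesis using card_mono[OF assms S(1)] S(3) by simp
qed

lemma Rrank_union_le:
  assumes "finite X" "finite Y"
  shows "Rrank d V (X \<union> Y) \<le> Rrank d V X + card Y"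
proof -
  obtain S where S: "S \<subseteq> X \<union> Y" "Rindep d V S" "card S = Rrank d V (X \<union> Y)"
    using Rrank_obtain[of "X \<union> Y"] assms by blast
  have "card S \<le> card (S \<inter> X) + card (S \<inter> Y)"
  proof -
    have "card ((S \<inter> X) \<union> (S \<inter> Y)) \<le> card (S \<inter> X) + card (S \<inter> Y)" by (rule card_Un_le)
    moreover have "(S \<inter> X) \<union> (S \<inter> Y) = S" using S(1) by blast
    ultimately show ?thesis by simp
  qed
  moreover have "card (S \<inter> X) \<le> Rrank d V X"
    using Rrank_ge[OF assms(1), of "S \<inter> X"] Rindep_subset[OF S(2), of "S \<inter> X"] by blast
  moreover have "card (S \<inter> Y) \<le> card Y" using assms(2) by (simp add: card_mono)
  ultimately show ?thesis using S(3) by linarith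
qed

lemma Rrank_span:
  assumes finF: "finite F" and sub: "F' \<subseteq> F"
    and sp: "\<forall>e\<in>F. rowv d V (gen_p d V) e \<in> fv.span (rowv d V (gen_p d V) ` F')"
  shows "Rrank d V F \<le> Rrank d V F'"
proof -
  let ?r = "rowv d V (gen_p d V)"
  have finF': "finite F'" using finF sub finite_subset by blast
  obtain S where S: "S \<subseteq> F" "Rindep d V S" "card S = Rrank d V F" using Rrank_obtain[OF finF] by blast
  obtain T where T: "T \<subseteq> F'" "Rindep d V T" "card T = Rrank d V F'" using Rrank_obtain[OF finF'] by blast
  have finT: "finite T" using T(1) finF' finite_subset by blast
  have Tsp: "\<forall>e\<in>F'. ?r e \<in> fv.span (?r ` T)"
  proof (rule ccontr)
    assume "\<not> (\<forall>e\<in>F'. ?r e \<in> fv.span (?r ` T))"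
    then obtain e where e: "e \<in> F'" "?r e \<notin> fv.span (?r ` T)" by blast
    have eT: "e \<notin> T" using e(2) fv.span_base by blast
    have "Rindep d V (insert e T)"
      unfolding Rindep_iff
    proof (intro conjI)
      show "finite (insert e T)" using finT by simp
      show "inj_on ?r (insert e T)"
      proof -
        have "?r e \<notin> ?r ` T" using e(2) fv.span_base by blast
        then show ?thesis using T(2) eT unfolding Rindep_iff by (simp add: inj_on_insert)
      qed
      show "fv.independent (?r ` insert e T)"
        using T(2) e(2) fv.independent_insertI[of "?r e" "?r ` T"] unfolding Rindep_iff by simp
    qed
    then have "card (insert e T) \<le> Rrank d V F'" using Rrank_ge[OF finF'] e(1) T(1) by blast
    then show False using T(3) eT finT by simp
  qed
  have "fv.span (?r ` F') \<subseteq> fv.span (?r ` T)"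
    using Tsp by (intro fv.span_minimal) auto
  then have "?r ` S \<subseteq> fv.span (?r ` T)" using sp S(1) by blast
  moreover have "fv.independent (?r ` S)" "inj_on ?r S" using S(2) unfolding Rindep_iff by auto
  ultimately have "card (?r ` S) \<le> card (?r ` T)" using fv.independent_span_bound[of "?r ` T" "?r ` S"] finT by blast
  moreover have "card (?r ` S) = card S" using \<open>inj_on ?r S\<close> by (simp add: card_image)
  moreover have "card (?r ` T) = card T" using T(2) unfolding Rindep_iff by (simp add: card_image)
  ultimately show ?thesis using S(3) T(3) by simp
qed

definition ipK :: "'c set \<Rightarrow> ('c \<Rightarrow> real) \<Rightarrow> ('c \<Rightarrow> real) \<Rightarrow> real" where
  "ipK K f g = (\<Sum>k\<in>K. f k * g k)"

definition suppK :: "'c set \<Rightarrow> ('c \<Rightarrow> real) \<Rightarrow> bool" where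
  "suppK K f \<longleftrightarrow> (\<forall>k. k \<notin> K \<longrightarrow> f k = 0)"

lemma ip_sym: "ipK K f g = ipK K g f"
  unfolding ipK_def by (simp add: mult.commute)

lemma ip_diff_left: "ipK K (a - b) f = ipK K a f - ipK K b f"
  unfolding ipK_def by (simp add: algebra_simps sum_subtractf)

lemma ip_add_left: "ipK K (a + b) f = ipK K a f + ipK K b f"
  unfolding ipK_def by (simp add: algebra_simps sum.distrib)

lemma ip_scale_left: "ipK K (scaleF c a) f = c * ipK K a f"
  unfolding ipK_def by (simp add: sum_distrib_left mult.assoc)

lemma ip_span:
  assumes "\<forall>f\<in>F. ipK K q f = 0" "y \<in> fv.span F"
  shows "ipK K q y = 0"
proof -
  obtain t r where tr: "finite t" "t \<subseteq> F" "y = (\<Sum>a\<in>t. scaleF (r a) a)"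
    using assms(2) unfolding fv.span_explicit by blast
  have "ipK K q y = (\<Sum>k\<in>K. q k * (\<Sum>a\<in>t. r a * a k))"
    unfolding ipK_def tr(3) by (simp add: sum_fun_apply)
  also have "\<dots> = (\<Sum>a\<in>t. r a * ipK K q a)"
    unfolding ipK_def by (simp add: sum_distrib_left sum_distrib_right mult_ac sum.swap[of _ K])
  also have "\<dots> = 0" using assms(1) tr(2) by (auto intro!: sum.neutral)
  finally show ?thesis .
qed

lemma supp_span:
  assumes "\<forall>f\<in>F. suppK K f" "y \<in> fv.span F"
  shows "suppK K y"
proof -
  obtain t r where tr: "finite t" "t \<subseteq> F" "y = (\<Sum>a\<in>t. scaleF (r a) a)"
    using assms(2) unfolding fv.span_explicit by blast
  show ?thesis unfolding suppK_def tr(3)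
  proof (intro allI impI)
    fix k assume "k \<notin> K"
    then show "(\<Sum>a\<in>t. scaleF (r a) a) k = 0"
      using assms(1) tr(2) by (auto simp: sum_fun_apply suppK_def intro!: sum.neutral)
  qed
qed

lemma ip_self_zero:
  assumes "finite K" "ipK K f f = 0" "suppK K f"
  shows "f = 0"
proof
  fix k
  show "f k = 0 k"
  proof (cases "k \<in> K")
    case True
    have "\<forall>k\<in>K. f k * f k = 0"
      using assms(1,2) unfolding ipK_def by (subst sum_nonneg_eq_0_iff[symmetric]) auto
    then show ?thesis using True by simp
  next
    case False then show ?thesis using assms(3) unfolding suppK_def by simp
  qed
qed

lemma proj_exists:
  assumes "finite F" "finite K"
  shows "\<forall>f\<in>F. suppK K f \<Longrightarrow> suppK K r \<Longrightarrow> \<exists>s\<in>fv.span F. \<forall>f\<in>F. ipK K (r - s) f = 0"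
  using assms(1)
proof (induction F arbitrary: r rule: finite_induct)
  case empty
  show ?case by (rule bexI[of _ 0], simp, rule fv.span_zero)
next
  case (insert t0 F)
  obtain s1 where s1: "s1 \<in> fv.span F" "\<forall>f\<in>F. ipK K (r - s1) f = 0"
    using insert.IH[of r] insert.prems by blast
  obtain s0 where s0: "s0 \<in> fv.span F" "\<forall>f\<in>F. ipK K (t0 - s0) f = 0"
    using insert.IH[of t0] insert.prems by blast
  define t' where "t' = t0 - s0"
  have spF: "fv.span F \<subseteq> fv.span (insert t0 F)" by (rule fv.span_mono) blast
  have perp_s0: "ipK K (r - s) s0 = 0" if "\<forall>f\<in>F. ipK K (r - s) f = 0" for s
    using ip_span[OF that s0(1)] .
  show ?case
  proof (cases "ipK K t' t' = 0")
    case True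
    have "suppK K t'"
    proof -
      have "suppK K s0" using supp_span[OF _ s0(1)] insert.prems(1) by blast
      then show ?thesis using insert.prems(1) unfolding t'_def suppK_def by auto
    qed
    then have "t' = 0" using ip_self_zero[OF assms(2) True] by blast
    then have "t0 = s0" unfolding t'_def by simp
    show ?thesis
    proof (rule bexI[of _ s1])
      show "s1 \<in> fv.span (insert t0 F)" using s1(1) spF by blast
      show "\<forall>f\<in>insert t0 F. ipK K (r - s1) f = 0"
        using s1(2) perp_s0[OF s1(2)] \<open>t0 = s0\<close> by auto
    qed
  next
    case False
    define \<alpha> where "\<alpha> = ipK K (r - s1) t' / ipK K t' t'"
    define s where "s = s1 + scaleF \<alpha> t'"
    have t'sp: "t' \<in> fv.span (insert t0 F)"
      unfolding t'_def using fv.span_diff[OF fv.span_base[of t0 "insert t0 F"]] s0(1) spF by blast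
    have ssp: "s \<in> fv.span (insert t0 F)"
      unfolding s_def using fv.span_add[OF _ fv.span_scale[OF t'sp]] s1(1) spF by blast
    have rs: "r - s = (r - s1) - scaleF \<alpha> t'" unfolding s_def by (simp add: algebra_simps)
    have perpF: "\<forall>f\<in>F. ipK K (r - s) f = 0"
    proof
      fix f assume f: "f \<in> F"
      have a: "ipK K t' f = 0" using s0(2) f unfolding t'_def by blast
      have b: "ipK K (r - s1) f = 0" using s1(2) f by blast
      have "ipK K (r - s) f = ipK K (r - s1) f - ipK K (scaleF \<alpha> t') f" unfolding rs by (rule ip_diff_left)
      then show "ipK K (r - s) f = 0" using a b by (simp add: ip_scale_left)
    qed
    have "ipK K (r - s) t' = ipK K (r - s1) t' - ipK K (scaleF \<alpha> t') t'" unfolding rs by (rule ip_diff_left)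
    then have "ipK K (r - s) t' = 0" unfolding ip_scale_left \<alpha>_def using False by simp
    moreover have "t0 = t' + s0" unfolding t'_def by simp
    ultimately have "ipK K (r - s) t0 = 0"
      using perp_s0[OF perpF] by (simp add: ip_sym[of K "r - s"] ip_add_left)
    then show ?thesis using perpF ssp by blast
  qed
qed

lemma dual_span:
  assumes "finite K" "finite F" "\<forall>f\<in>F. suppK K f" "suppK K r"
    and h: "\<And>q. \<forall>f\<in>F. ipK K q f = 0 \<Longrightarrow> ipK K q r = 0"
  shows "r \<in> fv.span F"
proof -
  obtain s where s: "s \<in> fv.span F" "\<forall>f\<in>F. ipK K (r - s) f = 0"
    using proj_exists[OF assms(2,1,3,4)] by blast
  have "ipK K (r - s) r = 0" using h[OF s(2)] .
  moreover have "ipK K (r - s) s = 0" using ip_span[OF s(2) s(1)] .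
  moreover have "ipK K (r - s) (r - s) = ipK K (r - s) r - ipK K (r - s) s"
    unfolding ipK_def by (simp add: right_diff_distrib sum_subtractf)
  ultimately have "ipK K (r - s) (r - s) = 0" by simp
  moreover have "suppK K (r - s)"
    using supp_span[OF assms(3) s(1)] assms(4) unfolding suppK_def by simp
  ultimately have "r - s = 0" using ip_self_zero[OF assms(1)] by blast
  then show ?thesis using s(1) by simp
qed

lemma the_other: "a \<noteq> b \<Longrightarrow> (THE y. y \<in> {a, b} \<and> y \<noteq> a) = b"
  by (rule the_equality) auto

lemma rig_row_a: "a \<noteq> b \<Longrightarrow> rig_row p {a, b} a i = p a i - p b i"
  unfolding rig_row_def using the_other[of a b] by simp

lemma rig_row_b: "a \<noteq> b \<Longrightarrow> rig_row p {a, b} b i = p b i - p a i"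
proof -
  assume "a \<noteq> b"
  moreover have "{b, a} = {a, b}" by blast
  ultimately show ?thesis using rig_row_a[of b a p i] by simp
qed

lemma rig_row_out: "u \<notin> e \<Longrightarrow> rig_row p e u i = 0"
  unfolding rig_row_def by simp

lemma generic_alg: "finite V \<Longrightarrow> alg_indep_Q (V \<times> {..<d}) (\<lambda>(u, i). gen_p d V u i)"
  using gen_p_generic[of V d] unfolding generic_def by simp

lemma distinct_coords1:
  assumes "finite V" "u \<in> V" "w \<in> V" "u \<noteq> w"
  shows "gen_p 1 V u 0 \<noteq> gen_p 1 V w 0"
proof -
  let ?I = "V \<times> {..<1::nat}"
  have fI: "finite ?I" using assms(1) by simp
  have pu: "polyfun ?I (\<lambda>z. z (u, 0))" by (rule polyfun_var[OF fI]) (use assms(2) in simp)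
  have pw: "polyfun ?I (\<lambda>z. z (w, 0))" by (rule polyfun_var[OF fI]) (use assms(3) in simp)
  have pf: "polyfun ?I (\<lambda>z. z (u, 0) - z (w, 0))" by (rule polyfun_diff[OF pu pw])
  define wt :: "'a \<times> nat \<Rightarrow> real" where "wt = (\<lambda>k. if fst k = u then 1 else 0)"
  have "wt (u, 0) - wt (w, 0) \<noteq> 0" using assms(4) by (simp add: wt_def)
  from generic_nz[OF generic_alg[OF assms(1)] pf, of wt, OF this]
  have "(\<lambda>(a, i). gen_p 1 V a i) (u, 0) - (\<lambda>(a, i). gen_p 1 V a i) (w, 0) \<noteq> 0" .
  then show ?thesis by simp
qed

lemma suc_mod: "i < n \<Longrightarrow> Suc i mod n = (if Suc i = n then 0 else Suc i)"
  by (cases "Suc i = n") auto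

lemma neg_div_self: fixes a b :: real assumes "a \<noteq> b" shows "(b - a) / (a - b) = -1"
proof -
  have "a - b \<noteq> 0" using assms by simp
  then show ?thesis by (simp add: field_simps)
qed

definition cyc_edges :: "'a list \<Rightarrow> 'a set set" where
  "cyc_edges cs = (\<lambda>i. {cs ! i, cs ! (Suc i mod length cs)}) ` {..<length cs}"

definition is_cycle :: "'a list \<Rightarrow> bool" where
  "is_cycle cs \<longleftrightarrow> distinct cs \<and> 3 \<le> length cs"

lemma edge_index_inj:
  assumes "is_cycle cs" "i < length cs" "j < length cs"
    "{cs ! i, cs ! (Suc i mod length cs)} = {cs ! j, cs ! (Suc j mod length cs)}"
  shows "i = j"
proof -
  let ?n = "length cs"
  have d: "distinct cs" "3 \<le> ?n" using assms(1) unfolding is_cycle_def by auto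
  have n0: "0 < ?n" using d(2) by linarith
  have si: "Suc i mod ?n < ?n" "Suc j mod ?n < ?n" using mod_less_divisor[OF n0] by blast+
  have eq: "\<And>k l. k < ?n \<Longrightarrow> l < ?n \<Longrightarrow> cs ! k = cs ! l \<Longrightarrow> k = l"
    using d(1) nth_eq_iff_index_eq by blast
  show ?thesis
  proof (cases "cs ! i = cs ! j")
    case True then show ?thesis using eq assms(2,3) by blast
  next
    case False
    then have "cs ! i = cs ! (Suc j mod ?n)" "cs ! (Suc i mod ?n) = cs ! j"
      using assms(4) by (auto simp: doubleton_eq_iff)
    then have 1: "i = Suc j mod ?n" and 2: "Suc i mod ?n = j"
      using eq assms(2,3) si by blast+
    have "False"
      using 1 2 assms(2,3) d(2) by (auto simp: suc_mod split: if_splits)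
    then show ?thesis by simp
  qed
qed

lemma sum_rotate_mod:
  assumes "0 < n"
  shows "(\<Sum>i<n. f (Suc i mod n)) = (\<Sum>i<n. (f i :: real))"
proof -
  have "bij_betw (\<lambda>i. Suc i mod n) {..<n} {..<n}"
  proof (rule bij_betw_imageI)
    show "inj_on (\<lambda>i. Suc i mod n) {..<n}"
    proof (rule inj_onI)
      fix i j assume "i \<in> {..<n}" "j \<in> {..<n}" "Suc i mod n = Suc j mod n"
      then show "i = j"
        by (auto simp: suc_mod split: if_splits)
    qed
    show "(\<lambda>i. Suc i mod n) ` {..<n} = {..<n}"
    proof
      show "(\<lambda>i. Suc i mod n) ` {..<n} \<subseteq> {..<n}" using assms by auto
      show "{..<n} \<subseteq> (\<lambda>i. Suc i mod n) ` {..<n}"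
      proof
        fix k assume k: "k \<in> {..<n}"
        show "k \<in> (\<lambda>i. Suc i mod n) ` {..<n}"
        proof (cases k)
          case 0
          then show ?thesis using assms by (intro image_eqI[of _ _ "n - 1"]) auto
        next
          case (Suc k')
          then show ?thesis using k by (intro image_eqI[of _ _ k']) auto
        qed
      qed
    qed
  qed
  then show ?thesis by (rule sum.reindex_bij_betw)
qed

lemma cycle_dependent:
  assumes finV: "finite V" and cs: "is_cycle cs" "set cs \<subseteq> V"
  shows "\<not> rows_indep 1 V (gen_p 1 V) (cyc_edges cs)"
proof
  assume ri: "rows_indep 1 V (gen_p 1 V) (cyc_edges cs)"
  let ?p = "gen_p 1 V"
  let ?n = "length cs"
  let ?ed = "\<lambda>i. {cs ! i, cs ! (Suc i mod ?n)}"
  have n3: "3 \<le> ?n" and dist: "distinct cs" using cs(1) unfolding is_cycle_def by auto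
  have inj: "inj_on ?ed {..<?n}"
    using edge_index_inj[OF cs(1)] by (intro inj_onI) auto
  have memV: "cs ! i \<in> V" if "i < ?n" for i using cs(2) that nth_mem by blast
  have neq: "cs ! i \<noteq> cs ! (Suc i mod ?n)" if "i < ?n" for i
  proof
    assume "cs ! i = cs ! (Suc i mod ?n)"
    moreover have "Suc i mod ?n < ?n" using n3 mod_less_divisor[of ?n "Suc i"] by linarith
    ultimately have "i = Suc i mod ?n" using dist that nth_eq_iff_index_eq by blast
    then show False using n3 that by (auto simp: suc_mod split: if_splits)
  qed
  have dne: "?p (cs ! i) 0 - ?p (cs ! (Suc i mod ?n)) 0 \<noteq> 0" if "i < ?n" for i
  proof -
    have "Suc i mod ?n < ?n" using n3 mod_less_divisor[of ?n "Suc i"] by linarith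
    then show ?thesis using distinct_coords1[OF finV memV[OF that] memV neq[OF that]] by simp
  qed
  define c where "c = (\<lambda>e. if e \<in> cyc_edges cs then
      1 / (?p (cs ! (THE i. i < ?n \<and> e = ?ed i)) 0 - ?p (cs ! (Suc (THE i. i < ?n \<and> e = ?ed i) mod ?n)) 0) else 0)"
  have cval: "c (?ed i) = 1 / (?p (cs ! i) 0 - ?p (cs ! (Suc i mod ?n)) 0)" if "i < ?n" for i
  proof -
    have "(THE j. j < ?n \<and> ?ed i = ?ed j) = i"
      using that edge_index_inj[OF cs(1)] by (intro the_equality) auto
    moreover have "?ed i \<in> cyc_edges cs" unfolding cyc_edges_def using that by blast
    ultimately show ?thesis unfolding c_def by simp
  qed
  have "\<forall>u\<in>V. \<forall>i<1. (\<Sum>e\<in>cyc_edges cs. c e * rig_row ?p e u i) = 0"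
  proof (intro ballI allI impI)
    fix u and i :: nat assume "u \<in> V" "i < 1"
    then have i0: "i = 0" by simp
    have "(\<Sum>e\<in>cyc_edges cs. c e * rig_row ?p e u i) = (\<Sum>k<?n. c (?ed k) * rig_row ?p (?ed k) u 0)"
      unfolding cyc_edges_def i0 by (rule sum.reindex[OF inj, unfolded comp_def])
    also have "\<dots> = (\<Sum>k<?n. (if u = cs ! k then 1 else 0) - (if u = cs ! (Suc k mod ?n) then 1 else 0))"
    proof (intro sum.cong refl)
      fix k assume k: "k \<in> {..<?n}"
      have nk: "cs ! k \<noteq> cs ! (Suc k mod ?n)" using neq k by simp
      show "c (?ed k) * rig_row ?p (?ed k) u 0 = (if u = cs ! k then 1 else 0) - (if u = cs ! (Suc k mod ?n) then 1 else 0)"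
      proof (cases "u = cs ! k")
        case True
        then show ?thesis using cval[of k] k nk dne[of k] rig_row_a[OF nk, of ?p 0] by auto
      next
        case F1: False
        show ?thesis
        proof (cases "u = cs ! (Suc k mod ?n)")
          case True
          have "?p (cs ! (Suc k mod ?n)) 0 - ?p (cs ! k) 0 = - (?p (cs ! k) 0 - ?p (cs ! (Suc k mod ?n)) 0)" by simp
          then show ?thesis using True F1 cval[of k] k nk dne[of k] rig_row_b[OF nk, of ?p 0]
            neg_div_self[of "?p (cs ! k) 0" "?p (cs ! (Suc k mod ?n)) 0"] by auto
        next
          case False
          then show ?thesis using F1 rig_row_out[of u "?ed k" ?p 0] by simp
        qed
      qed
    qed
    also have "\<dots> = (\<Sum>k<?n. (if u = cs ! k then 1 else 0)) - (\<Sum>k<?n. (if u = cs ! (Suc k mod ?n) then 1 else 0))"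
      by (simp add: sum_subtractf)
    also have "(\<Sum>k<?n. (if u = cs ! (Suc k mod ?n) then 1 else 0)) = (\<Sum>k<?n. (if u = cs ! k then 1 else (0::real)))"
      using sum_rotate_mod[of ?n "\<lambda>k. if u = cs ! k then 1 else 0"] n3 by linarith
    finally show "(\<Sum>e\<in>cyc_edges cs. c e * rig_row ?p e u i) = 0" by simp
  qed
  then have "\<forall>e\<in>cyc_edges cs. c e = 0" using ri unfolding rows_indep_def by blast
  moreover have "?ed 0 \<in> cyc_edges cs" unfolding cyc_edges_def using n3 by auto
  moreover have "c (?ed 0) \<noteq> 0"
  proof -
    have "0 < ?n" using n3 by linarith
    then show ?thesis using cval[of 0] dne[of 0] by simp
  qed
  ultimately show False by blast
qed

lemma deg2_cycle:
  assumes finZ: "finite Z" and ne: "Z \<noteq> {}"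
    and edg: "\<forall>e\<in>Z. \<exists>a b. a \<noteq> b \<and> e = {a, b}"
    and deg: "\<forall>e\<in>Z. \<forall>u\<in>e. \<exists>e'\<in>Z. e' \<noteq> e \<and> u \<in> e'"
  shows "\<exists>cs. is_cycle cs \<and> cyc_edges cs \<subseteq> Z \<and> set cs \<subseteq> \<Union>Z"
proof -
  define isp where "isp = (\<lambda>ws. distinct ws \<and> set ws \<subseteq> \<Union>Z \<and> 2 \<le> length ws \<and>
      (\<forall>i. Suc i < length ws \<longrightarrow> {ws ! i, ws ! Suc i} \<in> Z))"
  define PS where "PS = {ws. isp ws}"
  have finU: "finite (\<Union>Z)"
  proof (rule finite_Union[OF finZ])
    fix e assume "e \<in> Z"
    then obtain a b where "e = {a, b}" using edg by blast
    then show "finite e" by simp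
  qed
  have "PS \<subseteq> {ws. set ws \<subseteq> \<Union>Z \<and> length ws \<le> card (\<Union>Z)}"
  proof
    fix ws assume "ws \<in> PS"
    then have "distinct ws" "set ws \<subseteq> \<Union>Z" unfolding PS_def isp_def by auto
    moreover have "length ws \<le> card (\<Union>Z)"
      using card_mono[OF finU \<open>set ws \<subseteq> \<Union>Z\<close>] distinct_card[OF \<open>distinct ws\<close>] by simp
    ultimately show "ws \<in> {ws. set ws \<subseteq> \<Union>Z \<and> length ws \<le> card (\<Union>Z)}" by simp
  qed
  then have finPS: "finite PS" using finite_lists_length_le[OF finU] finite_subset by blast
  obtain e0 where e0: "e0 \<in> Z" using ne by blast
  then obtain a0 b0 where ab0: "a0 \<noteq> b0" "e0 = {a0, b0}" using edg by blast
  have "[a0, b0] \<in> PS" unfolding PS_def isp_def using ab0 e0 by auto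
  then have neL: "length ` PS \<noteq> {}" by blast
  define n where "n = Max (length ` PS)"
  have "n \<in> length ` PS" unfolding n_def using Max_in[OF finite_imageI[OF finPS] neL] .
  then obtain ws where ws: "ws \<in> PS" "length ws = n" by blast
  have maxl: "length ws' \<le> n" if "ws' \<in> PS" for ws'
    unfolding n_def using finPS that by (intro Max_ge) auto
  have wsp: "distinct ws" "set ws \<subseteq> \<Union>Z" "2 \<le> length ws" "\<And>i. Suc i < length ws \<Longrightarrow> {ws ! i, ws ! Suc i} \<in> Z"
    using ws(1) unfolding PS_def isp_def by auto
  define m where "m = length ws"
  define z where "z = ws ! (m - 1)"
  define w where "w = ws ! (m - 2)"
  have m2: "2 \<le> m" using wsp(3) m_def by simp
  have wz: "{w, z} \<in> Z"
  proof -
    have 1: "Suc (m - 2) < length ws" using m2 m_def by linarith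
    have 2: "Suc (m - 2) = m - 1" using m2 by linarith
    show ?thesis using wsp(4)[OF 1] unfolding 2 w_def z_def .
  qed
  obtain e' where e': "e' \<in> Z" "e' \<noteq> {w, z}" "z \<in> e'" using deg wz by blast
  obtain a b where ab: "a \<noteq> b" "e' = {a, b}" using edg e'(1) by blast
  define z' where "z' = (if a = z then b else a)"
  have e'z: "e' = {z, z'}" and zz': "z' \<noteq> z"
  proof -
    have "z = a \<or> z = b" using ab(2) e'(3) by blast
    then show "e' = {z, z'}" "z' \<noteq> z" using ab unfolding z'_def by auto
  qed
  have z'w: "z' \<noteq> w" using e'(2) e'z by auto
  have z'U: "z' \<in> \<Union>Z" using e'(1) e'z by auto
  show ?thesis
  proof (cases "z' \<in> set ws")
    case False
    have "ws @ [z'] \<in> PS"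
      unfolding PS_def isp_def
    proof (intro CollectI conjI allI impI)
      show "distinct (ws @ [z'])" using wsp(1) False by simp
      show "set (ws @ [z']) \<subseteq> \<Union>Z" using wsp(2) z'U by simp
      show "2 \<le> length (ws @ [z'])" using wsp(3) by simp
      fix i assume i: "Suc i < length (ws @ [z'])"
      show "{(ws @ [z']) ! i, (ws @ [z']) ! Suc i} \<in> Z"
      proof (cases "Suc i < length ws")
        case True
        then show ?thesis using wsp(4)[OF True] by (simp add: nth_append)
      next
        case False
        then have "i = m - 1" "Suc i = m" using i m_def by auto
        then have "(ws @ [z']) ! i = z" "(ws @ [z']) ! Suc i = z'"
          unfolding z_def using m2 m_def by (auto simp: nth_append)
        then show ?thesis using e'z e'(1) by simp
      qed
    qed
    then have "length (ws @ [z']) \<le> n" by (rule maxl)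
    then show ?thesis using ws(2) by simp
  next
    case True
    then obtain j where j: "j < m" "ws ! j = z'" unfolding m_def by (auto simp: in_set_conv_nth)
    have jz: "j \<noteq> m - 1" using j zz' unfolding z_def by auto
    have jw: "j \<noteq> m - 2" using j z'w unfolding w_def by auto
    have j3: "j + 3 \<le> m" using j jz jw m2 by linarith
    define cs where "cs = drop j ws"
    have lcs: "length cs = m - j" unfolding cs_def m_def by simp
    have csn: "cs ! k = ws ! (j + k)" if "k < length cs" for k
    proof -
      have "j \<le> length ws" using j m_def by simp
      then show ?thesis unfolding cs_def by (rule nth_drop)
    qed
    have "distinct cs" unfolding cs_def using wsp(1) by simp
    moreover have "3 \<le> length cs" using lcs j3 by linarith
    ultimately have "is_cycle cs" unfolding is_cycle_def by simp
    moreover have "set cs \<subseteq> \<Union>Z" using set_drop_subset[of j ws] wsp(2) unfolding cs_def by (rule subset_trans)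
    moreover have "cyc_edges cs \<subseteq> Z"
    proof
      fix e assume "e \<in> cyc_edges cs"
      then obtain i where i: "i < length cs" "e = {cs ! i, cs ! (Suc i mod length cs)}"
        unfolding cyc_edges_def by blast
      show "e \<in> Z"
      proof (cases "Suc i < length cs")
        case True
        then have "e = {ws ! (j + i), ws ! Suc (j + i)}" using i csn by simp
        moreover have "Suc (j + i) < length ws" using True lcs m_def by simp
        ultimately show ?thesis using wsp(4) by simp
      next
        case False
        then have "Suc i = length cs" using i by simp
        have a1: "cs ! i = ws ! (m - 1)"
        proof -
          have "cs ! i = ws ! (j + i)" using csn i(1) by simp
          moreover have "j + i = m - 1" using \<open>Suc i = length cs\<close> lcs j3 by linarith
          ultimately show ?thesis by simp
        qed
        have a2: "cs ! (Suc i mod length cs) = ws ! j"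
        proof -
          have "Suc i mod length cs = 0" using \<open>Suc i = length cs\<close> by simp
          moreover have "cs ! 0 = ws ! j" using csn[of 0] lcs j3 by simp
          ultimately show ?thesis by simp
        qed
        have "e = {z, z'}" using i(2) a1 a2 j(2) unfolding z_def by simp
        then show ?thesis using e'z e'(1) by simp
      qed
    qed
    ultimately show ?thesis by blast
  qed
qed

lemma circuit_cycle:
  assumes finV: "finite V"
    and edg: "\<forall>e\<in>Z. \<exists>a b. a \<in> V \<and> b \<in> V \<and> a \<noteq> b \<and> e = {a, b}"
    and circ: "Rcircuit 1 V Z"
  shows "\<exists>cs. is_cycle cs \<and> set cs \<subseteq> V \<and> cyc_edges cs = Z"
proof -
  let ?p = "gen_p 1 V"
  have finZ: "finite Z" and nind: "\<not> Rindep 1 V Z" and minl0: "\<forall>S. S \<subset> Z \<longrightarrow> Rindep 1 V S"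
    using circ unfolding Rcircuit_def by blast+
  have minl: "\<And>S. S \<subset> Z \<Longrightarrow> Rindep 1 V S" using minl0 by blast
  have "\<not> rows_indep 1 V ?p Z" using nind finZ unfolding Rindep_def by simp
  then obtain c where c0: "\<forall>u\<in>V. \<forall>i<1. (\<Sum>e\<in>Z. c e * rig_row ?p e u i) = 0" and c1: "\<exists>e\<in>Z. c e \<noteq> 0"
    unfolding rows_indep_def by blast
  have allnz: "c e \<noteq> 0" if "e \<in> Z" for e
  proof
    assume ce: "c e = 0"
    define Z' where "Z' = {e\<in>Z. c e \<noteq> 0}"
    have "Z' \<subset> Z" unfolding Z'_def using ce that by blast
    then have "Rindep 1 V Z'" by (rule minl)
    then have ri: "rows_indep 1 V ?p Z'" unfolding Rindep_def by simp
    have "\<forall>u\<in>V. \<forall>i<1. (\<Sum>e\<in>Z'. c e * rig_row ?p e u i) = 0"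
    proof (intro ballI allI impI)
      fix u i assume "u \<in> V" "i < (1::nat)"
      have "(\<Sum>e\<in>Z'. c e * rig_row ?p e u i) = (\<Sum>e\<in>Z. c e * rig_row ?p e u i)"
        unfolding Z'_def by (rule sum.mono_neutral_left) (use finZ in auto)
      then show "(\<Sum>e\<in>Z'. c e * rig_row ?p e u i) = 0" using c0 \<open>u \<in> V\<close> \<open>i < 1\<close> by simp
    qed
    then have "\<forall>e\<in>Z'. c e = 0" using ri unfolding rows_indep_def by blast
    then show False using c1 unfolding Z'_def by blast
  qed
  have deg: "\<forall>e\<in>Z. \<forall>u\<in>e. \<exists>e'\<in>Z. e' \<noteq> e \<and> u \<in> e'"
  proof (intro ballI, rule ccontr)
    fix e u assume e: "e \<in> Z" and u: "u \<in> e" and no: "\<not> (\<exists>e'\<in>Z. e' \<noteq> e \<and> u \<in> e')"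
    obtain a b where ab: "a \<in> V" "b \<in> V" "a \<noteq> b" "e = {a, b}" using edg e by blast
    define w where "w = (if u = a then b else a)"
    have ew: "e = {u, w}" "u \<noteq> w" "u \<in> V" "w \<in> V" using ab u unfolding w_def by auto
    have "(\<Sum>e'\<in>Z. c e' * rig_row ?p e' u 0) = c e * rig_row ?p e u 0"
    proof -
      have "(\<Sum>e'\<in>Z. c e' * rig_row ?p e' u 0) = c e * rig_row ?p e u 0 + (\<Sum>e'\<in>Z - {e}. c e' * rig_row ?p e' u 0)"
        using finZ e by (simp add: sum.remove)
      also have "(\<Sum>e'\<in>Z - {e}. c e' * rig_row ?p e' u 0) = 0"
        using no by (intro sum.neutral) (auto simp: rig_row_out)
      finally show ?thesis by simp
    qed
    also have "\<dots> = c e * (?p u 0 - ?p w 0)" using rig_row_a[OF ew(2), of ?p 0] ew(1) by simp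
    finally have "(\<Sum>e'\<in>Z. c e' * rig_row ?p e' u 0) = c e * (?p u 0 - ?p w 0)" .
    moreover have "c e * (?p u 0 - ?p w 0) \<noteq> 0"
      using allnz[OF e] distinct_coords1[OF finV ew(3,4,2)] by simp
    moreover have "(\<Sum>e'\<in>Z. c e' * rig_row ?p e' u 0) = 0" using c0 ew(3) by simp
    ultimately show False by simp
  qed
  have ne: "Z \<noteq> {}" using nind Rindep_empty by blast
  have edg2: "\<forall>e\<in>Z. \<exists>a b. a \<noteq> b \<and> e = {a, b}"
  proof
    fix e assume "e \<in> Z"
    then obtain a b where "a \<noteq> b" "e = {a, b}" using edg by blast
    then show "\<exists>a b. a \<noteq> b \<and> e = {a, b}" by blast
  qed
  obtain cs where cs: "is_cycle cs" "cyc_edges cs \<subseteq> Z" "set cs \<subseteq> \<Union>Z"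
    using deg2_cycle[OF finZ ne edg2 deg] by blast
  have "\<Union>Z \<subseteq> V"
  proof
    fix u assume "u \<in> \<Union>Z"
    then obtain e where "e \<in> Z" "u \<in> e" by blast
    then obtain a b where "a \<in> V" "b \<in> V" "e = {a, b}" using edg by blast
    then show "u \<in> V" using \<open>u \<in> e\<close> by blast
  qed
  then have csV: "set cs \<subseteq> V" using cs(3) by blast
  have "\<not> Rindep 1 V (cyc_edges cs)"
    using cycle_dependent[OF finV cs(1) csV] unfolding Rindep_def by simp
  then have "cyc_edges cs = Z" using cs(2) minl psubsetI by metis
  then show ?thesis using cs(1) csV by blast
qed

lemma mod_add_cancel:
  fixes a s t n :: nat
  shows "(a + s) mod n = (a + t) mod n \<longleftrightarrow> s mod n = t mod n"
proof -
  have *: "(a + s) mod n = (a + t) mod n \<longleftrightarrow> s mod n = t mod n" if "s \<le> t" for s t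
  proof -
    have "(a + t) mod n = (a + s) mod n \<longleftrightarrow> n dvd (a + t) - (a + s)"
      using that by (intro mod_eq_dvd_iff_nat) simp
    moreover have "t mod n = s mod n \<longleftrightarrow> n dvd t - s" using that by (intro mod_eq_dvd_iff_nat)
    moreover have "(a + t) - (a + s) = t - s" by simp
    ultimately show ?thesis by metis
  qed
  show ?thesis
  proof (cases "s \<le> t")
    case True then show ?thesis using * by blast
  next
    case False then have "t \<le> s" by simp
    then show ?thesis using *[of t s] by metis
  qed
qed

lemma mod_lt3: "3 \<le> (n::nat) \<Longrightarrow> a mod n < n"
proof -
  assume "3 \<le> n" then have "0 < n" by linarith
  then show ?thesis by simp
qed

definition cf :: "'a list \<Rightarrow> nat \<Rightarrow> nat \<Rightarrow> 'a" where
  "cf cs ix t = cs ! ((ix + t) mod length cs)"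

lemma cf_eq_iff:
  assumes "is_cycle cs"
  shows "cf cs ix s = cf cs ix t \<longleftrightarrow> s mod length cs = t mod length cs"
proof -
  let ?n = "length cs"
  have n0: "0 < ?n" using assms unfolding is_cycle_def by linarith
  have d: "distinct cs" using assms unfolding is_cycle_def by simp
  have "cs ! ((ix + s) mod ?n) = cs ! ((ix + t) mod ?n) \<longleftrightarrow> (ix + s) mod ?n = (ix + t) mod ?n"
    using nth_eq_iff_index_eq[OF d] n0 by simp
  then show ?thesis unfolding cf_def mod_add_cancel .
qed

lemma cf_mem:
  assumes "is_cycle cs" shows "cf cs ix t \<in> set cs"
proof -
  have "0 < length cs" using assms unfolding is_cycle_def by linarith
  then show ?thesis unfolding cf_def by simp
qed

lemma cf_0: "ix < length cs \<Longrightarrow> cf cs ix 0 = cs ! ix"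
  unfolding cf_def by simp

lemma cf_edge:
  assumes "is_cycle cs"
  shows "{cf cs ix t, cf cs ix (Suc t)} \<in> cyc_edges cs"
proof -
  let ?n = "length cs"
  have n0: "0 < ?n" using assms unfolding is_cycle_def by linarith
  let ?k = "(ix + t) mod ?n"
  have "?k < ?n" using n0 by simp
  moreover have "Suc ?k mod ?n = (ix + Suc t) mod ?n" using mod_Suc_eq[of "ix + t" ?n] by simp
  ultimately show ?thesis unfolding cyc_edges_def cf_def by (intro image_eqI[of _ _ ?k]) auto
qed

lemma cf_surj:
  assumes "is_cycle cs" "ix < length cs" "v \<in> set cs"
  shows "\<exists>j<length cs. cf cs ix j = v"
proof -
  let ?n = "length cs"
  obtain k where k: "k < ?n" "cs ! k = v" using assms(3) by (auto simp: in_set_conv_nth)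
  define j where "j = (k + ?n - ix) mod ?n"
  have n0: "0 < ?n" using assms unfolding is_cycle_def by linarith
  have "(ix + j) mod ?n = (ix + (k + ?n - ix)) mod ?n" unfolding j_def by (simp add: mod_add_right_eq)
  also have "ix + (k + ?n - ix) = k + ?n" using assms(2) by simp
  also have "(k + ?n) mod ?n = k" using k(1) by simp
  finally have "cf cs ix j = v" unfolding cf_def using k(2) by simp
  moreover have "j < ?n" unfolding j_def using n0 by simp
  ultimately show ?thesis by blast
qed

lemma cf_xedge:
  assumes cyc: "is_cycle cs" and ix: "ix < length cs" and e: "{cs ! ix, c} \<in> cyc_edges cs"
  shows "c = cf cs ix 1 \<or> c = cf cs ix (length cs - 1)"
proof -
  let ?n = "length cs"
  have n3: "3 \<le> ?n" and d: "distinct cs" using cyc unfolding is_cycle_def by auto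
  obtain k where k: "k < ?n" "{cs ! ix, c} = {cs ! k, cs ! (Suc k mod ?n)}"
    using e unfolding cyc_edges_def by blast
  have sk: "Suc k mod ?n < ?n" using mod_lt3[OF n3] .
  have neq: "cs ! k \<noteq> cs ! (Suc k mod ?n)"
  proof
    assume "cs ! k = cs ! (Suc k mod ?n)"
    then have "k = Suc k mod ?n" using nth_eq_iff_index_eq[OF d k(1) sk] by simp
    then show False using k(1) n3 by (simp add: suc_mod split: if_splits)
  qed
  show ?thesis
  proof (cases "cs ! ix = cs ! k")
    case True
    then have "ix = k" using nth_eq_iff_index_eq[OF d ix k(1)] by simp
    then have "c = cs ! (Suc ix mod ?n)" using k(2) True neq by (auto simp: doubleton_eq_iff)
    then show ?thesis unfolding cf_def by simp
  next
    case False
    then have 1: "cs ! ix = cs ! (Suc k mod ?n)" and 2: "c = cs ! k" using k(2) by (auto simp: doubleton_eq_iff)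
    have ixk: "ix = Suc k mod ?n" using nth_eq_iff_index_eq[OF d ix sk] 1 by simp
    have "(ix + (?n - 1)) mod ?n = k"
    proof (cases "Suc k = ?n")
      case True
      then have "ix = 0" using ixk by simp
      then show ?thesis using True by simp
    next
      case False
      then have "ix = Suc k" using ixk k(1) by simp
      then have "ix + (?n - 1) = k + ?n" using n3 by simp
      then show ?thesis using k(1) by simp
    qed
    then show ?thesis unfolding cf_def using 2 by simp
  qed
qed

section \<open>Telescoping along walks\<close>

locale tel =
  fixes E :: "'a set set" and V :: "'a set" and x y :: 'a
    and la mu :: "'a \<Rightarrow> real" and tau :: "'a \<Rightarrow> 'a \<Rightarrow> real"
  assumes H1: "\<And>u w. {u, w} \<in> E \<Longrightarrow> u \<noteq> w \<Longrightarrow> la u - la w = mu u * tau u w - mu w * tau w u"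
    and H2: "\<And>u. u \<in> V \<Longrightarrow> u \<noteq> x \<Longrightarrow> u \<noteq> y \<Longrightarrow> mu u = 0"
begin

lemma walk:
  assumes "\<forall>i<k. {g i, g (Suc i)} \<in> E \<and> g i \<noteq> g (Suc i)" "1 \<le> k"
    "\<forall>i. 0 < i \<longrightarrow> i < k \<longrightarrow> g i \<in> V \<and> g i \<noteq> x \<and> g i \<noteq> y"
  shows "la (g 0) - la (g k) = mu (g 0) * tau (g 0) (g 1) - mu (g k) * tau (g k) (g (k - 1))"
  using assms
proof (induction k)
  case 0 then show ?case by simp
next
  case (Suc k)
  have e: "la (g k) - la (g (Suc k)) = mu (g k) * tau (g k) (g (Suc k)) - mu (g (Suc k)) * tau (g (Suc k)) (g k)"
    using H1 Suc.prems(1) by simp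
  show ?case
  proof (cases "k = 0")
    case True then show ?thesis using e by simp
  next
    case False
    have ih: "la (g 0) - la (g k) = mu (g 0) * tau (g 0) (g 1) - mu (g k) * tau (g k) (g (k - 1))"
      using Suc.IH Suc.prems False by simp
    have "g k \<in> V \<and> g k \<noteq> x \<and> g k \<noteq> y" using Suc.prems(3) False by simp
    then have "mu (g k) = 0" using H2 by blast
    then show ?thesis using ih e by simp
  qed
qed

definition xyp :: "(nat \<Rightarrow> 'a) \<Rightarrow> nat \<Rightarrow> bool" where
  "xyp g k \<longleftrightarrow> 1 \<le> k \<and> g 0 = x \<and> g k = y \<and> (\<forall>i<k. {g i, g (Suc i)} \<in> E \<and> g i \<noteq> g (Suc i)) \<and>
     (\<forall>i. 0 < i \<longrightarrow> i < k \<longrightarrow> g i \<in> V \<and> g i \<noteq> x \<and> g i \<noteq> y)"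

lemma path_eq:
  assumes "xyp g k"
  shows "la x - la y = mu x * tau x (g 1) - mu y * tau y (g (k - 1))"
  using walk[of k g] assms unfolding xyp_def by auto

lemma path_prefix:
  assumes "xyp g k" "0 < s" "s < k"
  shows "la x - la (g s) = mu x * tau x (g 1)"
proof -
  have "la (g 0) - la (g s) = mu (g 0) * tau (g 0) (g 1) - mu (g s) * tau (g s) (g (s - 1))"
    using walk[of s g] assms unfolding xyp_def by auto
  moreover have "mu (g s) = 0" using assms H2 unfolding xyp_def by blast
  ultimately show ?thesis using assms(1) unfolding xyp_def by simp
qed

end


lemma mod_suc_neq: "2 \<le> (n::nat) \<Longrightarrow> i mod n \<noteq> Suc i mod n"
  by (simp add: mod_Suc)

definition pat1 :: "'a \<Rightarrow> 'a \<Rightarrow> 'a set \<Rightarrow> 'a \<Rightarrow> 'a \<Rightarrow> bool" where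
  "pat1 x y V a b \<longleftrightarrow> (a = y \<and> b = x) \<or> (a \<in> V \<and> b \<in> V \<and> a \<noteq> x \<and> a \<noteq> y \<and> b \<noteq> x \<and> b \<noteq> y)"

definition pat2 :: "'a \<Rightarrow> 'a \<Rightarrow> 'a \<Rightarrow> 'a \<Rightarrow> 'a \<Rightarrow> 'a \<Rightarrow> bool" where
  "pat2 x y a b a' b' \<longleftrightarrow> a \<noteq> a' \<and> b \<noteq> b' \<and> (a \<noteq> y \<longrightarrow> a' \<noteq> y \<longrightarrow> a \<noteq> a' \<and> a \<noteq> b' \<and> b \<noteq> a' \<and> b \<noteq> b')"

definition detD :: "('a \<Rightarrow> 'a \<Rightarrow> real) \<Rightarrow> 'a \<Rightarrow> 'a \<Rightarrow> 'a \<Rightarrow> 'a \<Rightarrow> 'a \<Rightarrow> 'a \<Rightarrow> 'a \<Rightarrow> 'a \<Rightarrow> real" where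
  "detD tau x y a1 b1 a2 b2 a3 b3 =
     (tau x a1 - tau x a2) * (tau y b1 - tau y b3) - (tau x a1 - tau x a3) * (tau y b1 - tau y b2)"

locale tel2 = tel +
  assumes H3: "\<And>a b. a \<in> V \<Longrightarrow> b \<in> V \<Longrightarrow> a \<noteq> x \<Longrightarrow> b \<noteq> x \<Longrightarrow> a \<noteq> b \<Longrightarrow> tau x a \<noteq> tau x b"
    and H4: "\<And>a1 b1 a2 b2 a3 b3. pat1 x y V a1 b1 \<Longrightarrow> pat1 x y V a2 b2 \<Longrightarrow> pat1 x y V a3 b3 \<Longrightarrow>
       pat2 x y a1 b1 a2 b2 \<Longrightarrow> pat2 x y a1 b1 a3 b3 \<Longrightarrow> pat2 x y a2 b2 a3 b3 \<Longrightarrow>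
       detD tau x y a1 b1 a2 b2 a3 b3 \<noteq> 0"
    and xV: "x \<in> V" and yV: "y \<in> V" and xy: "x \<noteq> y"
begin

lemma meet:
  assumes "xyp g k" "xyp h l" "0 < s" "s < k" "0 < t" "t < l" "g s = h t" "g 1 \<noteq> h 1"
  shows "mu x = 0"
proof -
  have 1: "la x - la (g s) = mu x * tau x (g 1)" by (rule path_prefix[OF assms(1,3,4)])
  have 2: "la x - la (h t) = mu x * tau x (h 1)" by (rule path_prefix[OF assms(2,5,6)])
  have g1: "g 1 \<in> V \<and> g 1 \<noteq> x" using assms(1,3,4) unfolding xyp_def by simp
  have h1: "h 1 \<in> V \<and> h 1 \<noteq> x" using assms(2,5,6) unfolding xyp_def by simp
  have "tau x (g 1) \<noteq> tau x (h 1)" using H3 g1 h1 assms(8) by blast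
  then have ne: "tau x (g 1) - tau x (h 1) \<noteq> 0" by simp
  have "mu x * tau x (g 1) = la x - la (g s)" using 1 by simp
  also have "\<dots> = la x - la (h t)" using assms(7) by simp
  also have "\<dots> = mu x * tau x (h 1)" using 2 by simp
  finally have "mu x * tau x (g 1) = mu x * tau x (h 1)" .
  then have eq: "mu x * (tau x (g 1) - tau x (h 1)) = 0" by (simp add: right_diff_distrib)
  show ?thesis using eq ne by (simp only: mult_eq_0_iff) blast
qed

lemma xyp_int:
  assumes "xyp g k" "0 < i" "i < k"
  shows "g i \<in> V" "g i \<noteq> x" "g i \<noteq> y"
  using assms unfolding xyp_def by blast+

lemma xyp_ends:
  assumes "xyp g k" shows "g 0 = x" "g k = y" "1 \<le> k"
  using assms unfolding xyp_def by blast+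

lemma pat1_of:
  assumes "xyp g k" shows "pat1 x y V (g 1) (g (k - 1))"
proof (cases "k = 1")
  case True
  then have "g 1 = y" "g (k - 1) = x" using xyp_ends[OF assms] by auto
  then show ?thesis unfolding pat1_def by simp
next
  case False
  then have k: "0 < (1::nat)" "1 < k" "0 < k - 1" "k - 1 < k" using xyp_ends[OF assms] by auto
  show ?thesis unfolding pat1_def using xyp_int[OF assms k(1,2)] xyp_int[OF assms k(3,4)] by simp
qed

lemma pat2_of:
  assumes "xyp g k" "xyp h l" "g 1 \<noteq> h 1"
    "\<forall>s t. 0 < s \<longrightarrow> s < k \<longrightarrow> 0 < t \<longrightarrow> t < l \<longrightarrow> g s \<noteq> h t"
  shows "pat2 x y (g 1) (g (k - 1)) (h 1) (h (l - 1))"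
proof -
  have k1: "1 \<le> k" and l1: "1 \<le> l" using xyp_ends(3)[OF assms(1)] xyp_ends(3)[OF assms(2)] by auto
  have b: "g (k - 1) \<noteq> h (l - 1)"
  proof (cases "k = 1")
    case True
    note kk = True
    show ?thesis
    proof (cases "l = 1")
      case True
      then have "g 1 = y" "h 1 = y" using kk xyp_ends[OF assms(1)] xyp_ends[OF assms(2)] by auto
      then show ?thesis using assms(3) by simp
    next
      case False
      then have "0 < l - 1" "l - 1 < l" using l1 by auto
      then have "h (l - 1) \<noteq> x" using xyp_int[OF assms(2)] by blast
      moreover have "g (k - 1) = x" using kk xyp_ends[OF assms(1)] by simp
      ultimately show ?thesis by simp
    qed
  next
    case False
    note kk = False
    then have k2: "0 < k - 1" "k - 1 < k" using k1 by auto
    show ?thesis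
    proof (cases "l = 1")
      case True
      have "g (k - 1) \<noteq> x" using xyp_int[OF assms(1) k2] by blast
      moreover have "h (l - 1) = x" using True xyp_ends[OF assms(2)] by simp
      ultimately show ?thesis by simp
    next
      case False
      then have "0 < l - 1" "l - 1 < l" using l1 by auto
      then show ?thesis using k2 assms(4) by blast
    qed
  qed
  have c: "g 1 \<noteq> h (l - 1) \<and> g (k - 1) \<noteq> h 1"
    if "g 1 \<noteq> y" "h 1 \<noteq> y"
  proof -
    have "k \<noteq> 1"
    proof
      assume "k = 1" then have "g 1 = y" using xyp_ends(2)[OF assms(1)] by simp
      then show False using that(1) by simp
    qed
    then have k2: "0 < k - 1" "k - 1 < k" "0 < (1::nat)" "1 < k" using k1 by auto
    have "l \<noteq> 1"
    proof
      assume "l = 1" then have "h 1 = y" using xyp_ends(2)[OF assms(2)] by simp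
      then show False using that(2) by simp
    qed
    then have l2: "0 < l - 1" "l - 1 < l" "1 < l" using l1 by auto
    have "g 1 \<noteq> h (l - 1)" using assms(4)[rule_format, OF k2(3,4) l2(1,2)] .
    moreover have "g (k - 1) \<noteq> h 1" using assms(4)[rule_format, OF k2(1,2) k2(3) l2(3)] .
    ultimately show ?thesis by blast
  qed
  show ?thesis unfolding pat2_def using assms(3) b c by blast
qed

lemma three:
  assumes A: "xyp gA kA" and B: "xyp gB kB" and C: "xyp gC kC"
    and fAB: "gA 1 \<noteq> gB 1" and fAC: "gA 1 \<noteq> gC 1" and fBC: "gB 1 \<noteq> gC 1"
    and dAB: "\<forall>s t. 0 < s \<longrightarrow> s < kA \<longrightarrow> 0 < t \<longrightarrow> t < kB \<longrightarrow> gA s \<noteq> gB t"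
    and dAC: "\<forall>s t. 0 < s \<longrightarrow> s < kA \<longrightarrow> 0 < t \<longrightarrow> t < kC \<longrightarrow> gA s \<noteq> gC t"
    and dBC: "\<forall>s t. 0 < s \<longrightarrow> s < kB \<longrightarrow> 0 < t \<longrightarrow> t < kC \<longrightarrow> gB s \<noteq> gC t"
  shows "mu x = 0"
proof -
  have D: "detD tau x y (gA 1) (gA (kA - 1)) (gB 1) (gB (kB - 1)) (gC 1) (gC (kC - 1)) \<noteq> 0"
    by (rule H4[OF pat1_of[OF A] pat1_of[OF B] pat1_of[OF C] pat2_of[OF A B fAB dAB]
          pat2_of[OF A C fAC dAC] pat2_of[OF B C fBC dBC]])
  have eA: "la x - la y = mu x * tau x (gA 1) - mu y * tau y (gA (kA - 1))" by (rule path_eq[OF A])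
  have eB: "la x - la y = mu x * tau x (gB 1) - mu y * tau y (gB (kB - 1))" by (rule path_eq[OF B])
  have eC: "la x - la y = mu x * tau x (gC 1) - mu y * tau y (gC (kC - 1))" by (rule path_eq[OF C])
  have "mu x * detD tau x y (gA 1) (gA (kA - 1)) (gB 1) (gB (kB - 1)) (gC 1) (gC (kC - 1)) = 0"
  proof -
    define a1 where "a1 = tau x (gA 1)"
    define a2 where "a2 = tau x (gB 1)"
    define a3 where "a3 = tau x (gC 1)"
    define b1 where "b1 = tau y (gA (kA - 1))"
    define b2 where "b2 = tau y (gB (kB - 1))"
    define b3 where "b3 = tau y (gC (kC - 1))"
    have 1: "mu x * (a1 - a2) = mu y * (b1 - b2)" using eA eB unfolding a1_def a2_def b1_def b2_def
      by (simp add: algebra_simps)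
    have 2: "mu x * (a1 - a3) = mu y * (b1 - b3)" using eA eC unfolding a1_def a3_def b1_def b3_def
      by (simp add: algebra_simps)
    have "mu x * ((a1 - a2) * (b1 - b3) - (a1 - a3) * (b1 - b2))
        = (mu x * (a1 - a2)) * (b1 - b3) - (mu x * (a1 - a3)) * (b1 - b2)" by (simp add: algebra_simps)
    also have "\<dots> = 0" unfolding 1 2 by (simp add: algebra_simps)
    finally show ?thesis unfolding detD_def a1_def a2_def a3_def b1_def b2_def b3_def .
  qed
  then show ?thesis using D by simp
qed

lemma closed:
  assumes "g 0 = x" "g n = x" "3 \<le> n" "\<forall>i<n. {g i, g (Suc i)} \<in> E \<and> g i \<noteq> g (Suc i)"
    "\<forall>i. 0 < i \<longrightarrow> i < n \<longrightarrow> g i \<in> V \<and> g i \<noteq> x \<and> g i \<noteq> y" "g 1 \<noteq> g (n - 1)"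
  shows "mu x = 0"
proof -
  have "la (g 0) - la (g n) = mu (g 0) * tau (g 0) (g 1) - mu (g n) * tau (g n) (g (n - 1))"
    using walk[of n g] assms by auto
  then have "mu x * tau x (g 1) - mu x * tau x (g (n - 1)) = 0" using assms(1,2) by simp
  then have eq: "mu x * (tau x (g 1) - tau x (g (n - 1))) = 0" by (simp only: right_diff_distrib)
  have "g 1 \<in> V \<and> g 1 \<noteq> x" "g (n - 1) \<in> V \<and> g (n - 1) \<noteq> x" using assms(3,5) by auto
  then have "tau x (g 1) \<noteq> tau x (g (n - 1))" using H3 assms(6) by blast
  then have ne: "tau x (g 1) - tau x (g (n - 1)) \<noteq> 0" by simp
  show ?thesis using eq ne by (simp only: mult_eq_0_iff) blast
qed

end

lemma cf_n: "is_cycle cs \<Longrightarrow> cf cs ix (length cs) = cf cs ix 0"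
  using cf_eq_iff[of cs ix "length cs" 0] by simp

lemma cf_lt_eq:
  assumes "is_cycle cs" "s < length cs" "t < length cs"
  shows "cf cs ix s = cf cs ix t \<longleftrightarrow> s = t"
  using cf_eq_iff[OF assms(1), of ix s t] assms(2,3) by simp

lemma cf_consec: "is_cycle cs \<Longrightarrow> cf cs ix i \<noteq> cf cs ix (Suc i)"
proof -
  assume c: "is_cycle cs"
  then have "2 \<le> length cs" unfolding is_cycle_def by simp
  then show ?thesis using cf_eq_iff[OF c, of ix i "Suc i"] mod_suc_neq by blast
qed

lemma cyc_len: "is_cycle cs \<Longrightarrow> 3 \<le> length cs"
  unfolding is_cycle_def by simp

context tel2
begin

lemma cyc_nbrs:
  assumes cyc: "is_cycle cs" and ix: "ix < length cs" and xx: "cs ! ix = x"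
  shows "{x, cf cs ix 1} \<in> cyc_edges cs" "{x, cf cs ix (length cs - 1)} \<in> cyc_edges cs"
proof -
  have c0: "cf cs ix 0 = x" using cf_0[OF ix] xx by simp
  show "{x, cf cs ix 1} \<in> cyc_edges cs" using cf_edge[OF cyc, of ix 0] c0 by simp
  have n3: "3 \<le> length cs" using cyc_len[OF cyc] .
  have "Suc (length cs - 1) = length cs" using n3 by simp
  then have "{cf cs ix (length cs - 1), cf cs ix (length cs)} \<in> cyc_edges cs"
    using cf_edge[OF cyc, of ix "length cs - 1"] by simp
  moreover have "cf cs ix (length cs) = x" using cf_n[OF cyc] c0 by simp
  moreover have "{cf cs ix (length cs - 1), x} = {x, cf cs ix (length cs - 1)}" by blast
  ultimately show "{x, cf cs ix (length cs - 1)} \<in> cyc_edges cs" by simp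
qed

lemma cyc_closed:
  assumes cyc: "is_cycle cs" and csV: "set cs \<subseteq> V" and csE: "cyc_edges cs \<subseteq> E"
    and ix: "ix < length cs" and xx: "cs ! ix = x" and ny: "y \<notin> set cs"
  shows "mu x = 0"
proof -
  let ?g = "cf cs ix"
  let ?n = "length cs"
  have n3: "3 \<le> ?n" using cyc_len[OF cyc] .
  have g0: "?g 0 = x" using cf_0[OF ix] xx by simp
  have gn: "?g ?n = x" using cf_n[OF cyc] g0 by simp
  have edges: "\<forall>i<?n. {?g i, ?g (Suc i)} \<in> E \<and> ?g i \<noteq> ?g (Suc i)"
  proof (intro allI impI conjI)
    fix i
    show "{?g i, ?g (Suc i)} \<in> E" using cf_edge[OF cyc, of ix i] csE by blast
    show "?g i \<noteq> ?g (Suc i)" by (rule cf_consec[OF cyc])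
  qed
  have int: "\<forall>i. 0 < i \<longrightarrow> i < ?n \<longrightarrow> ?g i \<in> V \<and> ?g i \<noteq> x \<and> ?g i \<noteq> y"
  proof (intro allI impI)
    fix i assume i: "0 < i" "i < ?n"
    have "?g i \<in> set cs" by (rule cf_mem[OF cyc])
    moreover have "?g i \<noteq> ?g 0"
    proof -
      have "0 < ?n" using n3 by linarith
      then show ?thesis using cf_lt_eq[OF cyc i(2), of 0 ix] i by simp
    qed
    moreover have "?g i \<noteq> y" using \<open>?g i \<in> set cs\<close> ny by metis
    ultimately show "?g i \<in> V \<and> ?g i \<noteq> x \<and> ?g i \<noteq> y" using csV g0 by auto
  qed
  have "?g 1 \<noteq> ?g (?n - 1)"
  proof -
    have "1 < ?n" "?n - 1 < ?n" "1 \<noteq> ?n - 1" using n3 by auto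
    then show ?thesis using cf_lt_eq[OF cyc, of 1 "?n - 1" ix] by simp
  qed
  then show ?thesis by (rule closed[OF g0 gn n3 edges int])
qed

lemma cyc_paths:
  assumes cyc: "is_cycle cs" and csV: "set cs \<subseteq> V" and csE: "cyc_edges cs \<subseteq> E"
    and ix: "ix < length cs" and xx: "cs ! ix = x"
    and j: "0 < j" "j < length cs" and yj: "cf cs ix j = y"
  shows "xyp (cf cs ix) j"
    and "xyp (\<lambda>t. cf cs ix (length cs - t)) (length cs - j)"
    and "\<forall>s t. 0 < s \<longrightarrow> s < j \<longrightarrow> 0 < t \<longrightarrow> t < length cs - j \<longrightarrow> cf cs ix s \<noteq> cf cs ix (length cs - t)"
proof -
  let ?g = "cf cs ix"
  let ?n = "length cs"
  have n3: "3 \<le> ?n" using cyc_len[OF cyc] .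
  have g0: "?g 0 = x" using cf_0[OF ix] xx by simp
  have gn: "?g ?n = x" using cf_n[OF cyc] g0 by simp
  have edge: "{?g i, ?g (Suc i)} \<in> E" for i using cf_edge[OF cyc, of ix i] csE by blast
  have cons: "?g i \<noteq> ?g (Suc i)" for i using cf_consec[OF cyc] .
  have intv: "?g i \<in> V \<and> ?g i \<noteq> x \<and> ?g i \<noteq> y" if "0 < i" "i < ?n" "i \<noteq> j" for i
  proof -
    have "?g i \<in> set cs" by (rule cf_mem[OF cyc])
    moreover have "?g i \<noteq> ?g 0"
    proof -
      have "0 < ?n" using n3 by linarith
      then show ?thesis using cf_lt_eq[OF cyc that(2), of 0 ix] that(1) by simp
    qed
    moreover have "?g i \<noteq> ?g j" using cf_lt_eq[OF cyc that(2) j(2), of ix] that(3) by simp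
    ultimately show ?thesis using csV g0 yj by auto
  qed
  show "xyp ?g j"
    unfolding xyp_def
  proof (intro conjI allI impI)
    show "1 \<le> j" using j by simp
    show "?g 0 = x" by (rule g0)
    show "?g j = y" by (rule yj)
    fix i
    { assume "i < j" then show "{?g i, ?g (Suc i)} \<in> E" "?g i \<noteq> ?g (Suc i)" using edge cons by blast+ }
    { assume i: "0 < i" "i < j"
      then have "i < ?n" "i \<noteq> j" using j by auto
      then show "?g i \<in> V" "?g i \<noteq> x" "?g i \<noteq> y" using intv i(1) by blast+ }
  qed
  show "xyp (\<lambda>t. ?g (?n - t)) (?n - j)"
    unfolding xyp_def
  proof (intro conjI allI impI)
    show "1 \<le> ?n - j" using j by simp
    show "?g (?n - 0) = x" using gn by simp
    show "?g (?n - (?n - j)) = y" using yj j by simp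
    fix i
    { assume i: "i < ?n - j"
      then have e: "?n - i = Suc (?n - Suc i)" by simp
      have "{?g (?n - Suc i), ?g (Suc (?n - Suc i))} \<in> E" by (rule edge)
      moreover have "{?g (?n - Suc i), ?g (Suc (?n - Suc i))} = {?g (?n - i), ?g (?n - Suc i)}"
        unfolding e[symmetric] by blast
      ultimately show "{?g (?n - i), ?g (?n - Suc i)} \<in> E" by simp
      have "?g (?n - Suc i) \<noteq> ?g (Suc (?n - Suc i))" by (rule cons)
      then show "?g (?n - i) \<noteq> ?g (?n - Suc i)" unfolding e[symmetric] by simp }
    { assume i: "0 < i" "i < ?n - j"
      then have "0 < ?n - i" "?n - i < ?n" "?n - i \<noteq> j" using j by auto
      then show "?g (?n - i) \<in> V" "?g (?n - i) \<noteq> x" "?g (?n - i) \<noteq> y" using intv by blast+ }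
  qed
  show "\<forall>s t. 0 < s \<longrightarrow> s < j \<longrightarrow> 0 < t \<longrightarrow> t < ?n - j \<longrightarrow> ?g s \<noteq> ?g (?n - t)"
  proof (intro allI impI)
    fix s t assume st: "0 < s" "s < j" "0 < t" "t < ?n - j"
    then have "s < ?n" "?n - t < ?n" "s \<noteq> ?n - t" using j by auto
    then show "?g s \<noteq> ?g (?n - t)" using cf_lt_eq[OF cyc, of s "?n - t" ix] by simp
  qed
qed

lemma edge_mem_set: "e \<in> cyc_edges cs \<Longrightarrow> u \<in> e \<Longrightarrow> is_cycle cs \<Longrightarrow> u \<in> set cs"
proof -
  assume e: "e \<in> cyc_edges cs" and u: "u \<in> e" and c: "is_cycle cs"
  obtain k where k: "k < length cs" "e = {cs ! k, cs ! (Suc k mod length cs)}"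
    using e unfolding cyc_edges_def by blast
  have "Suc k mod length cs < length cs" using mod_lt3[OF cyc_len[OF c]] .
  moreover have "u = cs ! k \<or> u = cs ! (Suc k mod length cs)" using k(2) u by blast
  ultimately show ?thesis using k(1) nth_mem by metis
qed

lemma main_x:
  assumes c1: "is_cycle cs1" "set cs1 \<subseteq> V" "cyc_edges cs1 \<subseteq> E"
    and c2: "is_cycle cs2" "set cs2 \<subseteq> V" "cyc_edges cs2 \<subseteq> E"
    and a1: "{x, a} \<in> cyc_edges cs1" and b2: "{x, b} \<in> cyc_edges cs2" and b1: "{x, b} \<notin> cyc_edges cs1"
  shows "mu x = 0"
proof -
  have "x \<in> set cs1" using edge_mem_set[OF a1 _ c1(1)] by simp
  then obtain ix1 where ix1: "ix1 < length cs1" "cs1 ! ix1 = x" by (auto simp: in_set_conv_nth)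
  have "x \<in> set cs2" using edge_mem_set[OF b2 _ c2(1)] by simp
  then obtain ix2 where ix2: "ix2 < length cs2" "cs2 ! ix2 = x" by (auto simp: in_set_conv_nth)
  let ?f1 = "cf cs1 ix1" and ?n1 = "length cs1"
  let ?f2 = "cf cs2 ix2" and ?n2 = "length cs2"
  have n13: "3 \<le> ?n1" using cyc_len[OF c1(1)] .
  have n23: "3 \<le> ?n2" using cyc_len[OF c2(1)] .
  have bN1: "b \<noteq> ?f1 1" "b \<noteq> ?f1 (?n1 - 1)" using cyc_nbrs[OF c1(1) ix1] b1 by metis+
  have bN2: "b = ?f2 1 \<or> b = ?f2 (?n2 - 1)" using cf_xedge[OF c2(1) ix2(1)] b2 ix2(2) by simp
  show ?thesis
  proof (cases "y \<in> set cs1 \<and> y \<in> set cs2")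
    case False
    then show ?thesis using cyc_closed[OF c1 ix1] cyc_closed[OF c2 ix2] by blast
  next
    case True
    obtain j1 where j1: "j1 < ?n1" "?f1 j1 = y" using cf_surj[OF c1(1) ix1(1)] True by blast
    obtain j2 where j2: "j2 < ?n2" "?f2 j2 = y" using cf_surj[OF c2(1) ix2(1)] True by blast
    have f10: "?f1 0 = x" using cf_0[OF ix1(1)] ix1(2) by simp
    have f20: "?f2 0 = x" using cf_0[OF ix2(1)] ix2(2) by simp
    have j10: "0 < j1" using j1(2) f10 xy by (cases j1) auto
    have j20: "0 < j2" using j2(2) f20 xy by (cases j2) auto
    note P1 = cyc_paths[OF c1 ix1 j10 j1(1) j1(2)]
    note P2 = cyc_paths[OF c2 ix2 j20 j2(1) j2(2)]
    obtain gB kB where B: "xyp gB kB" "gB 1 = b"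
    proof (cases "b = ?f2 1")
      case True then show ?thesis using that[OF P2(1)] by simp
    next
      case False
      then have "b = ?f2 (?n2 - 1)" using bN2 by simp
      then show ?thesis using that[OF P2(2)] by simp
    qed
    let ?gA' = "\<lambda>t. ?f1 (?n1 - t)"
    have fA: "?f1 1 \<noteq> ?gA' 1"
    proof -
      have "1 < ?n1" "?n1 - 1 < ?n1" "1 \<noteq> ?n1 - 1" using n13 by auto
      then show ?thesis using cf_lt_eq[OF c1(1), of 1 "?n1 - 1" ix1] by simp
    qed
    have fAB: "?f1 1 \<noteq> gB 1" using B(2) bN1 by simp
    have fA'B: "?gA' 1 \<noteq> gB 1" using B(2) bN1 by simp
    show ?thesis
    proof (cases "\<exists>s t. 0 < s \<and> s < j1 \<and> 0 < t \<and> t < kB \<and> ?f1 s = gB t")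
      case True
      then obtain s t where st: "0 < s" "s < j1" "0 < t" "t < kB" "?f1 s = gB t" by blast
      show ?thesis by (rule meet[OF P1(1) B(1) st fAB])
    next
      case F1: False
      show ?thesis
      proof (cases "\<exists>s t. 0 < s \<and> s < ?n1 - j1 \<and> 0 < t \<and> t < kB \<and> ?gA' s = gB t")
        case True
        then obtain s t where st: "0 < s" "s < ?n1 - j1" "0 < t" "t < kB" "?gA' s = gB t" by blast
        show ?thesis by (rule meet[OF P1(2) B(1) st fA'B])
      next
        case F2: False
        show ?thesis
        proof (rule three[OF P1(1) P1(2) B(1) fA fAB fA'B])
          show "\<forall>s t. 0 < s \<longrightarrow> s < j1 \<longrightarrow> 0 < t \<longrightarrow> t < ?n1 - j1 \<longrightarrow> ?f1 s \<noteq> ?gA' t"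
            using P1(3) by simp
          show "\<forall>s t. 0 < s \<longrightarrow> s < j1 \<longrightarrow> 0 < t \<longrightarrow> t < kB \<longrightarrow> ?f1 s \<noteq> gB t" using F1 by blast
          show "\<forall>s t. 0 < s \<longrightarrow> s < ?n1 - j1 \<longrightarrow> 0 < t \<longrightarrow> t < kB \<longrightarrow> ?gA' s \<noteq> gB t" using F2 by blast
        qed
      qed
    qed
  qed
qed

end

definition PX :: "('a \<Rightarrow> nat \<Rightarrow> real) \<Rightarrow> 'a \<Rightarrow> 'a \<Rightarrow> real" where
  "PX p v u = p u 0 - p v 0"
definition PY :: "('a \<Rightarrow> nat \<Rightarrow> real) \<Rightarrow> 'a \<Rightarrow> 'a \<Rightarrow> real" where
  "PY p v u = p u 1 - p v 1"
definition crs :: "('a \<Rightarrow> nat \<Rightarrow> real) \<Rightarrow> 'a \<Rightarrow> 'a \<Rightarrow> 'a \<Rightarrow> real" where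
  "crs p v u w = PX p v u * PY p v w - PX p v w * PY p v u"
definition nmr :: "('a \<Rightarrow> nat \<Rightarrow> real) \<Rightarrow> 'a \<Rightarrow> 'a \<Rightarrow> 'a \<Rightarrow> real" where
  "nmr p v u w = PX p v u * (PX p v u - PX p v w) + PY p v u * (PY p v u - PY p v w)"
definition tauf :: "('a \<Rightarrow> nat \<Rightarrow> real) \<Rightarrow> 'a \<Rightarrow> 'a \<Rightarrow> 'a \<Rightarrow> real" where
  "tauf p v u w = nmr p v u w / crs p v u w"

definition zp :: "('a \<times> nat \<Rightarrow> real) \<Rightarrow> 'a \<Rightarrow> nat \<Rightarrow> real" where
  "zp z = (\<lambda>u i. z (u, i))"

lemma zp_apply[simp]: "zp z u i = z (u, i)" by (simp add: zp_def)

lemma pf_coord: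
  assumes "finite V" "u \<in> V" "i < 2"
  shows "polyfun (V \<times> {..<2}) (\<lambda>z. zp z u i)"
  using polyfun_var[of "V \<times> {..<2::nat}" "(u, i)"] assms by simp

lemma pf_PX:
  assumes "finite V" "u \<in> V" "v \<in> V"
  shows "polyfun (V \<times> {..<2}) (\<lambda>z. PX (zp z) v u)"
  unfolding PX_def by (rule polyfun_diff[OF pf_coord pf_coord]) (use assms in auto)

lemma pf_PY:
  assumes "finite V" "u \<in> V" "v \<in> V"
  shows "polyfun (V \<times> {..<2}) (\<lambda>z. PY (zp z) v u)"
  unfolding PY_def by (rule polyfun_diff[OF pf_coord pf_coord]) (use assms in auto)

lemma pf_crs:
  assumes "finite V" "u \<in> V" "w \<in> V" "v \<in> V"
  shows "polyfun (V \<times> {..<2}) (\<lambda>z. crs (zp z) v u w)"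
  unfolding crs_def
  by (rule polyfun_diff[OF polyfun_mult[OF pf_PX pf_PY] polyfun_mult[OF pf_PX pf_PY]]) (use assms in auto)

lemma pf_nmr:
  assumes "finite V" "u \<in> V" "w \<in> V" "v \<in> V"
  shows "polyfun (V \<times> {..<2}) (\<lambda>z. nmr (zp z) v u w)"
  unfolding nmr_def
  by (rule polyfun_add[OF polyfun_mult[OF pf_PX polyfun_diff[OF pf_PX pf_PX]]
        polyfun_mult[OF pf_PY polyfun_diff[OF pf_PY pf_PY]]]) (use assms in auto)

lemma zp_gen: "zp (\<lambda>(u, i). p u i) = p"
  by (simp add: zp_def)

lemma generic2:
  assumes "finite V"
  shows "alg_indep_Q (V \<times> {..<2}) (\<lambda>(u, i). gen_p 2 V u i)"
  using gen_p_generic[OF assms, of 2] unfolding generic_def by simp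

lemma gen_nz:
  assumes "finite V" "polyfun (V \<times> {..<2}) (\<lambda>z. f (zp z))" "f (zp w) \<noteq> 0"
  shows "f (gen_p 2 V) \<noteq> 0"
  using generic_nz[OF generic2[OF assms(1)] assms(2), of w] assms(3) zp_gen[of "gen_p 2 V"] by simp

definition wit :: "('a \<Rightarrow> real \<times> real) \<Rightarrow> 'a \<times> nat \<Rightarrow> real" where
  "wit pt = (\<lambda>(u, i). if i = 0 then fst (pt u) else snd (pt u))"

lemma wit0[simp]: "wit pt (u, 0) = fst (pt u)" by (simp add: wit_def)
lemma wit1[simp]: "wit pt (u, Suc 0) = snd (pt u)" by (simp add: wit_def)

lemma G1:
  assumes "finite V" "u \<in> V" "v \<in> V" "u \<noteq> v"
  shows "PX (gen_p 2 V) v u \<noteq> 0"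
proof -
  have "PX (zp (wit (\<lambda>a. if a = u then (1, 0) else (0, 0)))) v u \<noteq> 0"
    using assms(4) by (simp add: PX_def)
  then show ?thesis using gen_nz[OF assms(1) pf_PX[OF assms(1-3)]] by blast
qed

lemma G2:
  assumes "finite V" "u \<in> V" "w \<in> V" "v \<in> V" "u \<noteq> v" "w \<noteq> v" "u \<noteq> w"
  shows "crs (gen_p 2 V) v u w \<noteq> 0"
proof -
  have "crs (zp (wit (\<lambda>a. if a = u then (1, 0) else if a = w then (0, 1) else (0, 0)))) v u w \<noteq> 0"
    using assms(5-7) by (simp add: crs_def PX_def PY_def)
  then show ?thesis using gen_nz[OF assms(1) pf_crs[OF assms(1-4)]] by blast
qed

lemma G3:
  assumes "finite V" "x \<in> V" "a \<in> V" "b \<in> V" "v \<in> V"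
    "x \<noteq> v" "a \<noteq> v" "b \<noteq> v" "x \<noteq> a" "x \<noteq> b" "a \<noteq> b"
  shows "tauf (gen_p 2 V) v x a \<noteq> tauf (gen_p 2 V) v x b"
proof -
  let ?p = "gen_p 2 V"
  define f where "f = (\<lambda>p. nmr p v x a * crs p v x b - nmr p v x b * crs p v x a)"
  have pf: "polyfun (V \<times> {..<2}) (\<lambda>z. f (zp z))"
    unfolding f_def
    by (rule polyfun_diff[OF polyfun_mult[OF pf_nmr pf_crs] polyfun_mult[OF pf_nmr pf_crs]]) (use assms in auto)
  have "f (zp (wit (\<lambda>u. if u = x then (1, 0) else if u = a then (0, 1) else if u = b then (2, 1) else (0, 0)))) \<noteq> 0"
    using assms(6-11) by (simp add: f_def nmr_def crs_def PX_def PY_def)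
  then have fz: "f ?p \<noteq> 0" using gen_nz[OF assms(1) pf] by blast
  have ca: "crs ?p v x a \<noteq> 0" using G2[OF assms(1,2,3,5,6,7,9)] .
  have cb: "crs ?p v x b \<noteq> 0" using G2[OF assms(1,2,4,5,6,8,10)] .
  show ?thesis
  proof
    assume "tauf ?p v x a = tauf ?p v x b"
    then have "nmr ?p v x a * crs ?p v x b = nmr ?p v x b * crs ?p v x a"
      using ca cb unfolding tauf_def by (simp add: field_simps)
    then show False using fz unfolding f_def by simp
  qed
qed

lemma det_identity:
  fixes n1 n2 n3 c1 c2 c3 m1 m2 m3 d1 d2 d3 :: real
  assumes "c1 \<noteq> 0" "c2 \<noteq> 0" "c3 \<noteq> 0" "d1 \<noteq> 0" "d2 \<noteq> 0" "d3 \<noteq> 0"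
  shows "((n1/c1 - n2/c2)*(m1/d1 - m3/d3) - (n1/c1 - n3/c3)*(m1/d1 - m2/d2)) * (c1*c2*c3*d1*d2*d3)
     = (n1*c2 - n2*c1)*c3*(m1*d3 - m3*d1)*d2 - (n1*c3 - n3*c1)*c2*(m1*d2 - m2*d1)*d3"
proof -
  obtain t1 t2 t3 s1 s2 s3 where t: "n1 = t1 * c1" "n2 = t2 * c2" "n3 = t3 * c3" "m1 = s1 * d1" "m2 = s2 * d2" "m3 = s3 * d3"
    using assms by (metis nonzero_eq_divide_eq)
  show ?thesis unfolding t using assms by (simp add: algebra_simps)
qed

lemma edge_alg:
  fixes Xu Yu Au Bu Xw Yw Aw Bw :: real
  assumes Nu: "Xu^2 + Yu^2 \<noteq> 0" and Nw: "Xw^2 + Yw^2 \<noteq> 0" and c: "Xu*Yw - Xw*Yu \<noteq> 0"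
    and eq: "(Xu - Xw)*(Au - Aw) + (Yu - Yw)*(Bu - Bw) = 0"
  shows "(Xu*Bu - Yu*Au)/(Xu^2 + Yu^2) - (Xw*Bw - Yw*Aw)/(Xw^2 + Yw^2)
    = (Xu*Au + Yu*Bu)/(Xu^2 + Yu^2) * ((Xu*(Xu - Xw) + Yu*(Yu - Yw))/(Xu*Yw - Xw*Yu))
      - (Xw*Aw + Yw*Bw)/(Xw^2 + Yw^2) * ((Xw*(Xw - Xu) + Yw*(Yw - Yu))/(Xw*Yu - Xu*Yw))"
proof -
  define lu where "lu = (Xu*Bu - Yu*Au)/(Xu^2 + Yu^2)"
  define mu where "mu = (Xu*Au + Yu*Bu)/(Xu^2 + Yu^2)"
  define lw where "lw = (Xw*Bw - Yw*Aw)/(Xw^2 + Yw^2)"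
  define mw where "mw = (Xw*Aw + Yw*Bw)/(Xw^2 + Yw^2)"
  have Au: "Au = mu * Xu - lu * Yu"
  proof -
    have "mu * Xu - lu * Yu = ((Xu*Au + Yu*Bu)*Xu - (Xu*Bu - Yu*Au)*Yu)/(Xu^2 + Yu^2)"
      unfolding mu_def lu_def by (simp only: times_divide_eq_left diff_divide_distrib[symmetric])
    also have "(Xu*Au + Yu*Bu)*Xu - (Xu*Bu - Yu*Au)*Yu = Au * (Xu^2 + Yu^2)"
      by (simp add: algebra_simps power2_eq_square)
    also have "Au * (Xu^2 + Yu^2) / (Xu^2 + Yu^2) = Au" by (rule nonzero_mult_div_cancel_right[OF Nu])
    finally show ?thesis by simp
  qed
  have Bu: "Bu = mu * Yu + lu * Xu"
  proof -
    have "mu * Yu + lu * Xu = ((Xu*Au + Yu*Bu)*Yu + (Xu*Bu - Yu*Au)*Xu)/(Xu^2 + Yu^2)"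
      unfolding mu_def lu_def by (simp only: times_divide_eq_left add_divide_distrib[symmetric])
    also have "(Xu*Au + Yu*Bu)*Yu + (Xu*Bu - Yu*Au)*Xu = Bu * (Xu^2 + Yu^2)"
      by (simp add: algebra_simps power2_eq_square)
    also have "Bu * (Xu^2 + Yu^2) / (Xu^2 + Yu^2) = Bu" by (rule nonzero_mult_div_cancel_right[OF Nu])
    finally show ?thesis by simp
  qed
  have Aw: "Aw = mw * Xw - lw * Yw"
  proof -
    have "mw * Xw - lw * Yw = ((Xw*Aw + Yw*Bw)*Xw - (Xw*Bw - Yw*Aw)*Yw)/(Xw^2 + Yw^2)"
      unfolding mw_def lw_def by (simp only: times_divide_eq_left diff_divide_distrib[symmetric])
    also have "(Xw*Aw + Yw*Bw)*Xw - (Xw*Bw - Yw*Aw)*Yw = Aw * (Xw^2 + Yw^2)"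
      by (simp add: algebra_simps power2_eq_square)
    also have "Aw * (Xw^2 + Yw^2) / (Xw^2 + Yw^2) = Aw" by (rule nonzero_mult_div_cancel_right[OF Nw])
    finally show ?thesis by simp
  qed
  have Bw: "Bw = mw * Yw + lw * Xw"
  proof -
    have "mw * Yw + lw * Xw = ((Xw*Aw + Yw*Bw)*Yw + (Xw*Bw - Yw*Aw)*Xw)/(Xw^2 + Yw^2)"
      unfolding mw_def lw_def by (simp only: times_divide_eq_left add_divide_distrib[symmetric])
    also have "(Xw*Aw + Yw*Bw)*Yw + (Xw*Bw - Yw*Aw)*Xw = Bw * (Xw^2 + Yw^2)"
      by (simp add: algebra_simps power2_eq_square)
    also have "Bw * (Xw^2 + Yw^2) / (Xw^2 + Yw^2) = Bw" by (rule nonzero_mult_div_cancel_right[OF Nw])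
    finally show ?thesis by simp
  qed
  have c': "Xw*Yu - Xu*Yw \<noteq> 0" using c by simp
  have key: "(Xu*Yw - Xw*Yu) * (lu - lw) = mu * (Xu*(Xu - Xw) + Yu*(Yu - Yw)) - mw * (Xw*(Xu - Xw) + Yw*(Yu - Yw))"
  proof -
    have "(Xu - Xw)*((mu * Xu - lu * Yu) - (mw * Xw - lw * Yw)) + (Yu - Yw)*((mu * Yu + lu * Xu) - (mw * Yw + lw * Xw)) = 0"
      using eq unfolding Au Bu Aw Bw .
    then show ?thesis by (simp add: algebra_simps)
  qed
  have r1: "(Xw*(Xw - Xu) + Yw*(Yw - Yu))/(Xw*Yu - Xu*Yw) = (Xw*(Xu - Xw) + Yw*(Yu - Yw))/(Xu*Yw - Xw*Yu)"
  proof -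
    have 1: "Xw*(Xw - Xu) + Yw*(Yw - Yu) = -(Xw*(Xu - Xw) + Yw*(Yu - Yw))" by (simp add: algebra_simps)
    have 2: "Xw*Yu - Xu*Yw = -(Xu*Yw - Xw*Yu)" by simp
    show ?thesis unfolding 1 2 by (rule minus_divide_divide)
  qed
  have "mu * ((Xu*(Xu - Xw) + Yu*(Yu - Yw))/(Xu*Yw - Xw*Yu)) - mw * ((Xw*(Xu - Xw) + Yw*(Yu - Yw))/(Xu*Yw - Xw*Yu))
      = (mu * (Xu*(Xu - Xw) + Yu*(Yu - Yw)) - mw * (Xw*(Xu - Xw) + Yw*(Yu - Yw)))/(Xu*Yw - Xw*Yu)"
    by (simp only: times_divide_eq_right diff_divide_distrib)
  also have "\<dots> = (Xu*Yw - Xw*Yu) * (lu - lw) / (Xu*Yw - Xw*Yu)" unfolding key ..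
  also have "\<dots> = lu - lw" by (rule nonzero_mult_div_cancel_left[OF c])
  finally show ?thesis
    unfolding lu_def[symmetric] mu_def[symmetric] lw_def[symmetric] mw_def[symmetric] r1 by simp
qed

definition polyD :: "('a \<Rightarrow> nat \<Rightarrow> real) \<Rightarrow> 'a \<Rightarrow> 'a \<Rightarrow> 'a \<Rightarrow> 'a \<Rightarrow> 'a \<Rightarrow> 'a \<Rightarrow> 'a \<Rightarrow> 'a \<Rightarrow> 'a \<Rightarrow> real" where
  "polyD p v x y a1 b1 a2 b2 a3 b3 =
    (nmr p v x a1 * crs p v x a2 - nmr p v x a2 * crs p v x a1) * crs p v x a3 *
    (nmr p v y b1 * crs p v y b3 - nmr p v y b3 * crs p v y b1) * crs p v y b2
  - (nmr p v x a1 * crs p v x a3 - nmr p v x a3 * crs p v x a1) * crs p v x a2 *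
    (nmr p v y b1 * crs p v y b2 - nmr p v y b2 * crs p v y b1) * crs p v y b3"

lemma pf_polyD:
  assumes "finite V" "v \<in> V" "x \<in> V" "y \<in> V" "a1 \<in> V" "a2 \<in> V" "a3 \<in> V" "b1 \<in> V" "b2 \<in> V" "b3 \<in> V"
  shows "polyfun (V \<times> {..<2}) (\<lambda>z. polyD (zp z) v x y a1 b1 a2 b2 a3 b3)"
proof -
  note N = pf_nmr[OF assms(1)] and C = pf_crs[OF assms(1)]
  have X: "polyfun (V \<times> {..<2}) (\<lambda>z. (nmr (zp z) v x a1 * crs (zp z) v x a2 - nmr (zp z) v x a2 * crs (zp z) v x a1) * crs (zp z) v x a3)"
    using assms by (intro polyfun_mult polyfun_diff N C)
  have Y: "polyfun (V \<times> {..<2}) (\<lambda>z. (nmr (zp z) v y b1 * crs (zp z) v y b3 - nmr (zp z) v y b3 * crs (zp z) v y b1) * crs (zp z) v y b2)"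
    using assms by (intro polyfun_mult polyfun_diff N C)
  have X2: "polyfun (V \<times> {..<2}) (\<lambda>z. (nmr (zp z) v x a1 * crs (zp z) v x a3 - nmr (zp z) v x a3 * crs (zp z) v x a1) * crs (zp z) v x a2)"
    using assms by (intro polyfun_mult polyfun_diff N C)
  have Y2: "polyfun (V \<times> {..<2}) (\<lambda>z. (nmr (zp z) v y b1 * crs (zp z) v y b2 - nmr (zp z) v y b2 * crs (zp z) v y b1) * crs (zp z) v y b3)"
    using assms by (intro polyfun_mult polyfun_diff N C)
  have "polyfun (V \<times> {..<2}) (\<lambda>z. ((nmr (zp z) v x a1 * crs (zp z) v x a2 - nmr (zp z) v x a2 * crs (zp z) v x a1) * crs (zp z) v x a3) *
    ((nmr (zp z) v y b1 * crs (zp z) v y b3 - nmr (zp z) v y b3 * crs (zp z) v y b1) * crs (zp z) v y b2)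
  - ((nmr (zp z) v x a1 * crs (zp z) v x a3 - nmr (zp z) v x a3 * crs (zp z) v x a1) * crs (zp z) v x a2) *
    ((nmr (zp z) v y b1 * crs (zp z) v y b2 - nmr (zp z) v y b2 * crs (zp z) v y b1) * crs (zp z) v y b3))"
    by (rule polyfun_diff[OF polyfun_mult[OF X Y] polyfun_mult[OF X2 Y2]])
  then show ?thesis unfolding polyD_def by (simp add: mult.assoc)
qed

lemma G4:
  assumes fin: "finite V'" and vV: "v \<in> V'" and WV: "W \<subseteq> V'" and vW: "v \<notin> W"
    and xW: "x \<in> W" and yW: "y \<in> W" and xy: "x \<noteq> y"
    and P1: "pat1 x y W a1 b1" and P2: "pat1 x y W a2 b2" and P3: "pat1 x y W a3 b3"
    and Q12: "pat2 x y a1 b1 a2 b2" and Q13: "pat2 x y a1 b1 a3 b3" and Q23: "pat2 x y a2 b2 a3 b3"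
  shows "detD (tauf (gen_p 2 V') v) x y a1 b1 a2 b2 a3 b3 \<noteq> 0"
proof -
  let ?p = "gen_p 2 V'"
  have mem: "a1 \<in> W" "b1 \<in> W" "a2 \<in> W" "b2 \<in> W" "a3 \<in> W" "b3 \<in> W"
    using P1 P2 P3 xW yW unfolding pat1_def by auto
  have memV: "x \<in> V'" "y \<in> V'" "a1 \<in> V'" "b1 \<in> V'" "a2 \<in> V'" "b2 \<in> V'" "a3 \<in> V'" "b3 \<in> V'"
    using mem xW yW WV by auto
  have nv: "x \<noteq> v" "y \<noteq> v" "a1 \<noteq> v" "b1 \<noteq> v" "a2 \<noteq> v" "b2 \<noteq> v" "a3 \<noteq> v" "b3 \<noteq> v"
    using mem xW yW vW by auto
  have ax: "a1 \<noteq> x" "a2 \<noteq> x" "a3 \<noteq> x" "b1 \<noteq> y" "b2 \<noteq> y" "b3 \<noteq> y"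
    using P1 P2 P3 xy unfolding pat1_def by auto
  have ca1: "crs ?p v x a1 \<noteq> 0" by (rule G2[OF fin memV(1) memV(3) vV nv(1) nv(3) ax(1)[symmetric]])
  have ca2: "crs ?p v x a2 \<noteq> 0" by (rule G2[OF fin memV(1) memV(5) vV nv(1) nv(5) ax(2)[symmetric]])
  have ca3: "crs ?p v x a3 \<noteq> 0" by (rule G2[OF fin memV(1) memV(7) vV nv(1) nv(7) ax(3)[symmetric]])
  have cb1: "crs ?p v y b1 \<noteq> 0" by (rule G2[OF fin memV(2) memV(4) vV nv(2) nv(4) ax(4)[symmetric]])
  have cb2: "crs ?p v y b2 \<noteq> 0" by (rule G2[OF fin memV(2) memV(6) vV nv(2) nv(6) ax(5)[symmetric]])
  have cb3: "crs ?p v y b3 \<noteq> 0" by (rule G2[OF fin memV(2) memV(8) vV nv(2) nv(8) ax(6)[symmetric]])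
  have ident: "detD (tauf ?p v) x y a1 b1 a2 b2 a3 b3 *
      (crs ?p v x a1 * crs ?p v x a2 * crs ?p v x a3 * crs ?p v y b1 * crs ?p v y b2 * crs ?p v y b3)
      = polyD ?p v x y a1 b1 a2 b2 a3 b3"
    unfolding detD_def tauf_def polyD_def by (rule det_identity[OF ca1 ca2 ca3 cb1 cb2 cb3])
  define pt where "pt = (\<lambda>u. if u = v then (0::real, 0::real) else if u = x then (1, 0) else if u = y then (0, 1)
     else if u = a1 \<or> u = b1 then (1, 2) else if u = a2 \<or> u = b2 then (2, 3)
     else if u = a3 \<or> u = b3 then (3, -1) else (0, 0))"
  have tr: "a1 = y \<Longrightarrow> b1 = x" "a2 = y \<Longrightarrow> b2 = x" "a3 = y \<Longrightarrow> b3 = x"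
    using P1 P2 P3 unfolding pat1_def by auto
  have ntr1: "a1 \<noteq> y \<Longrightarrow> a1 \<noteq> x \<and> b1 \<noteq> x \<and> b1 \<noteq> y" using P1 unfolding pat1_def by auto
  have ntr2: "a2 \<noteq> y \<Longrightarrow> a2 \<noteq> x \<and> b2 \<noteq> x \<and> b2 \<noteq> y" using P2 unfolding pat1_def by auto
  have ntr3: "a3 \<noteq> y \<Longrightarrow> a3 \<noteq> x \<and> b3 \<noteq> x \<and> b3 \<noteq> y" using P3 unfolding pat1_def by auto
  have q12: "a1 \<noteq> a2" "b1 \<noteq> b2" "a1 \<noteq> y \<Longrightarrow> a2 \<noteq> y \<Longrightarrow> a1 \<noteq> b2 \<and> b1 \<noteq> a2" using Q12 unfolding pat2_def by auto
  have q13: "a1 \<noteq> a3" "b1 \<noteq> b3" "a1 \<noteq> y \<Longrightarrow> a3 \<noteq> y \<Longrightarrow> a1 \<noteq> b3 \<and> b1 \<noteq> a3" using Q13 unfolding pat2_def by auto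
  have q23: "a2 \<noteq> a3" "b2 \<noteq> b3" "a2 \<noteq> y \<Longrightarrow> a3 \<noteq> y \<Longrightarrow> a2 \<noteq> b3 \<and> b2 \<noteq> a3" using Q23 unfolding pat2_def by auto
  have wz: "polyD (zp (wit pt)) v x y a1 b1 a2 b2 a3 b3 \<noteq> 0"
  proof -
    consider "a1 \<noteq> y" "a2 \<noteq> y" "a3 \<noteq> y" | "a1 = y" "a2 \<noteq> y" "a3 \<noteq> y"
      | "a1 \<noteq> y" "a2 = y" "a3 \<noteq> y" | "a1 \<noteq> y" "a2 \<noteq> y" "a3 = y"
      using q12(1) q13(1) q23(1) by blast
    then show ?thesis
    proof cases
      case 1
      have F: "x \<noteq> v" "v \<noteq> x" "y \<noteq> v" "v \<noteq> y" "x \<noteq> y" "y \<noteq> x" "a1 \<noteq> v" "v \<noteq> a1" "a1 \<noteq> x" "x \<noteq> a1" "a1 \<noteq> y" "y \<noteq> a1" "b1 \<noteq> v" "v \<noteq> b1" "b1 \<noteq> x" "x \<noteq> b1" "b1 \<noteq> y" "y \<noteq> b1" "a2 \<noteq> v" "v \<noteq> a2" "a2 \<noteq> x" "x \<noteq> a2" "a2 \<noteq> y" "y \<noteq> a2" "b2 \<noteq> v" "v \<noteq> b2" "b2 \<noteq> x" "x \<noteq> b2" "b2 \<noteq> y" "y \<noteq> b2" "a3 \<noteq> v" "v \<noteq> a3" "a3 \<noteq> x" "x \<noteq> a3" "a3 \<noteq> y" "y \<noteq> a3" "b3 \<noteq> v" "v \<noteq> b3" "b3 \<noteq> x" "x \<noteq>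 b3" "b3 \<noteq> y" "y \<noteq> b3" "a1 \<noteq> a2" "a2 \<noteq> a1" "a1 \<noteq> b2" "b2 \<noteq> a1" "b1 \<noteq> a2" "a2 \<noteq> b1" "b1 \<noteq> b2" "b2 \<noteq> b1" "a1 \<noteq> a3" "a3 \<noteq> a1" "a1 \<noteq> b3" "b3 \<noteq> a1" "b1 \<noteq> a3" "a3 \<noteq> b1" "b1 \<noteq> b3" "b3 \<noteq> b1" "a2 \<noteq> a3" "a3 \<noteq> a2" "a2 \<noteq> b3" "b3 \<noteq> a2" "b2 \<noteq> a3" "a3 \<noteq> b2" "b2 \<noteq> b3" "b3 \<noteq> b2"
        using 1 nv ax tr ntr1 ntr2 ntr3 q12 q13 q23 xy by auto
      show ?thesis unfolding pt_def using F by (simp add: polyD_def nmr_def crs_def PX_def PY_def)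
    next
      case 2
      have F: "x \<noteq> v" "v \<noteq> x" "y \<noteq> v" "v \<noteq> y" "x \<noteq> y" "y \<noteq> x" "a2 \<noteq> v" "v \<noteq> a2" "a2 \<noteq> x" "x \<noteq> a2" "a2 \<noteq> y" "y \<noteq> a2" "b2 \<noteq> v" "v \<noteq> b2" "b2 \<noteq> x" "x \<noteq> b2" "b2 \<noteq> y" "y \<noteq> b2" "a3 \<noteq> v" "v \<noteq> a3" "a3 \<noteq> x" "x \<noteq> a3" "a3 \<noteq> y" "y \<noteq> a3" "b3 \<noteq> v" "v \<noteq> b3" "b3 \<noteq> x" "x \<noteq> b3" "b3 \<noteq> y" "y \<noteq> b3" "a2 \<noteq> a3" "a3 \<noteq> a2" "a2 \<noteq> b3" "b3 \<noteq> a2" "b2 \<noteq> a3" "a3 \<noteq> b2" "b2 \<noteq> b3" "b3 \<noteq> b2"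
        using 2 nv ax tr ntr1 ntr2 ntr3 q12 q13 q23 xy by auto
      have T: "a1 = y" "b1 = x" using 2 tr by auto
      show ?thesis unfolding T pt_def using F by (simp add: polyD_def nmr_def crs_def PX_def PY_def)
    next
      case 3
      have F: "x \<noteq> v" "v \<noteq> x" "y \<noteq> v" "v \<noteq> y" "x \<noteq> y" "y \<noteq> x" "a1 \<noteq> v" "v \<noteq> a1" "a1 \<noteq> x" "x \<noteq> a1" "a1 \<noteq> y" "y \<noteq> a1" "b1 \<noteq> v" "v \<noteq> b1" "b1 \<noteq> x" "x \<noteq> b1" "b1 \<noteq> y" "y \<noteq> b1" "a3 \<noteq> v" "v \<noteq> a3" "a3 \<noteq> x" "x \<noteq> a3" "a3 \<noteq> y" "y \<noteq> a3" "b3 \<noteq> v" "v \<noteq> b3" "b3 \<noteq> x" "x \<noteq> b3" "b3 \<noteq> y" "y \<noteq> b3" "a1 \<noteq> a3" "a3 \<noteq> a1" "a1 \<noteq> b3" "b3 \<noteq> a1" "b1 \<noteq> a3" "a3 \<noteq> b1" "b1 \<noteq> b3" "b3 \<noteq> b1"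
        using 3 nv ax tr ntr1 ntr2 ntr3 q12 q13 q23 xy by auto
      have T: "a2 = y" "b2 = x" using 3 tr by auto
      show ?thesis unfolding T pt_def using F by (simp add: polyD_def nmr_def crs_def PX_def PY_def)
    next
      case 4
      have F: "x \<noteq> v" "v \<noteq> x" "y \<noteq> v" "v \<noteq> y" "x \<noteq> y" "y \<noteq> x" "a1 \<noteq> v" "v \<noteq> a1" "a1 \<noteq> x" "x \<noteq> a1" "a1 \<noteq> y" "y \<noteq> a1" "b1 \<noteq> v" "v \<noteq> b1" "b1 \<noteq> x" "x \<noteq> b1" "b1 \<noteq> y" "y \<noteq> b1" "a2 \<noteq> v" "v \<noteq> a2" "a2 \<noteq> x" "x \<noteq> a2" "a2 \<noteq> y" "y \<noteq> a2" "b2 \<noteq> v" "v \<noteq> b2" "b2 \<noteq> x" "x \<noteq> b2" "b2 \<noteq> y" "y \<noteq> b2" "a1 \<noteq> a2" "a2 \<noteq> a1" "a1 \<noteq> b2" "b2 \<noteq> a1" "b1 \<noteq> a2" "a2 \<noteq> b1" "b1 \<noteq> b2" "b2 \<noteq> b1"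
        using 4 nv ax tr ntr1 ntr2 ntr3 q12 q13 q23 xy by auto
      have T: "a3 = y" "b3 = x" using 4 tr by auto
      show ?thesis unfolding T pt_def using F by (simp add: polyD_def nmr_def crs_def PX_def PY_def)
    qed
  qed
  have pz: "polyD ?p v x y a1 b1 a2 b2 a3 b3 \<noteq> 0"
    using gen_nz[OF fin pf_polyD[OF fin vV memV(1) memV(2) memV(3) memV(5) memV(7) memV(4) memV(6) memV(8)], of "wit pt"] wz by blast
  show ?thesis using ident pz by auto
qed

lemma ip_row:
  assumes fin: "finite W" and a: "a \<in> W" and b: "b \<in> W" and ab: "a \<noteq> b"
  shows "ipK (W \<times> {..<2}) q (rowv 2 W p {a, b})
     = (q (a, 0) - q (b, 0)) * (p a 0 - p b 0) + (q (a, 1) - q (b, 1)) * (p a 1 - p b 1)"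
proof -
  let ?f = "\<lambda>u i. q (u, i) * rig_row p {a, b} u i"
  have "ipK (W \<times> {..<2}) q (rowv 2 W p {a, b}) = (\<Sum>k\<in>W \<times> {..<2}. ?f (fst k) (snd k))"
    unfolding ipK_def rowv_def by (intro sum.cong refl) auto
  also have "\<dots> = (\<Sum>u\<in>W. \<Sum>i<2. ?f u i)"
    by (simp add: sum.cartesian_product case_prod_beta)
  also have "\<dots> = (\<Sum>u\<in>{a, b}. \<Sum>i<2. ?f u i)"
    by (rule sum.mono_neutral_right) (use fin a b in \<open>auto simp: rig_row_out\<close>)
  also have "\<dots> = (\<Sum>i<2. ?f a i) + (\<Sum>i<2. ?f b i)" using ab by simp
  also have "\<dots> = (q (a, 0) - q (b, 0)) * (p a 0 - p b 0) + (q (a, 1) - q (b, 1)) * (p a 1 - p b 1)"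
    by (simp add: numeral_2_eq_2 rig_row_a[OF ab] rig_row_b[OF ab] algebra_simps)
  finally show ?thesis .
qed

lemma kernel_x:
  assumes finV: "finite V" and vV: "v \<notin> V"
    and edg: "\<forall>e\<in>E. \<exists>a b. a \<in> V \<and> b \<in> V \<and> a \<noteq> b \<and> e = {a, b}"
    and xV: "x \<in> V" and yV: "y \<in> V" and xy: "x \<noteq> y"
    and qE: "\<forall>e\<in>E. ipK (insert v V \<times> {..<2}) q (rowv 2 (insert v V) (gen_p 2 (insert v V)) e) = 0"
    and qv: "\<forall>u\<in>V. u \<noteq> x \<longrightarrow> u \<noteq> y \<longrightarrow> ipK (insert v V \<times> {..<2}) q (rowv 2 (insert v V) (gen_p 2 (insert v V)) {v, u}) = 0"
    and c1: "is_cycle cs1" "set cs1 \<subseteq> V" "cyc_edges cs1 \<subseteq> E"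
    and c2: "is_cycle cs2" "set cs2 \<subseteq> V" "cyc_edges cs2 \<subseteq> E"
    and a1: "{x, a} \<in> cyc_edges cs1" and b2: "{x, b} \<in> cyc_edges cs2" and b1: "{x, b} \<notin> cyc_edges cs1"
  shows "ipK (insert v V \<times> {..<2}) q (rowv 2 (insert v V) (gen_p 2 (insert v V)) {v, x}) = 0"
proof -
  let ?V = "insert v V"
  let ?p = "gen_p 2 ?V"
  let ?K = "?V \<times> {..<2::nat}"
  have fin': "finite ?V" using finV by simp
  have vV': "v \<in> ?V" by simp
  define X where "X = PX ?p v"
  define Y where "Y = PY ?p v"
  define A where "A = (\<lambda>u. q (u, 0) - q (v, 0))"
  define B where "B = (\<lambda>u. q (u, 1) - q (v, 1))"
  define la where "la = (\<lambda>u. (X u * B u - Y u * A u) / (X u ^ 2 + Y u ^ 2))"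
  define mu where "mu = (\<lambda>u. (X u * A u + Y u * B u) / (X u ^ 2 + Y u ^ 2))"
  define tau where "tau = tauf ?p v"
  have uv: "u \<noteq> v" if "u \<in> V" for u using that vV by blast
  have Xnz: "X u \<noteq> 0" if "u \<in> V" for u
    unfolding X_def using G1[OF fin' _ vV'] that uv[OF that] by blast
  have Nnz: "X u ^ 2 + Y u ^ 2 \<noteq> 0" if "u \<in> V" for u
  proof -
    have "0 < X u ^ 2" using Xnz[OF that] by simp
    moreover have "0 \<le> Y u ^ 2" by simp
    ultimately show ?thesis by linarith
  qed
  have crnz: "X u * Y w - X w * Y u \<noteq> 0" if "u \<in> V" "w \<in> V" "u \<noteq> w" for u w
    using G2[OF fin' _ _ vV' uv[OF that(1)] uv[OF that(2)] that(3)] that unfolding X_def Y_def crs_def by blast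
  have iprow: "ipK ?K q (rowv 2 ?V ?p {u, w}) = (A u - A w) * (X u - X w) + (B u - B w) * (Y u - Y w)"
    if "u \<in> ?V" "w \<in> ?V" "u \<noteq> w" for u w
    unfolding ip_row[OF fin' that] A_def B_def X_def Y_def PX_def PY_def by simp
  interpret T: tel2 E V x y la mu tau
  proof unfold_locales
    fix u w assume uw: "{u, w} \<in> E" "u \<noteq> w"
    obtain a' b' where ab': "a' \<in> V" "b' \<in> V" "{u, w} = {a', b'}" using edg uw(1) by blast
    have uV: "u \<in> V" and wV: "w \<in> V" using ab'(1,2,3) by (auto simp: doubleton_eq_iff)
    have "ipK ?K q (rowv 2 ?V ?p {u, w}) = 0" using qE uw(1) by blast
    then have eq: "(X u - X w) * (A u - A w) + (Y u - Y w) * (B u - B w) = 0"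
      using iprow[of u w] uV wV uw(2) by (simp add: mult.commute)
    show "la u - la w = mu u * tau u w - mu w * tau w u"
      unfolding la_def mu_def tau_def tauf_def nmr_def crs_def X_def[symmetric] Y_def[symmetric]
      by (rule edge_alg[OF Nnz[OF uV] Nnz[OF wV] crnz[OF uV wV uw(2)] eq])
  next
    fix u assume u: "u \<in> V" "u \<noteq> x" "u \<noteq> y"
    have "ipK ?K q (rowv 2 ?V ?p {v, u}) = 0" using qv u by blast
    then have "(A v - A u) * (X v - X u) + (B v - B u) * (Y v - Y u) = 0"
      using iprow[of v u] u(1) uv[OF u(1)] by simp
    moreover have "A v = 0" "B v = 0" "X v = 0" "Y v = 0" unfolding A_def B_def X_def Y_def PX_def PY_def by simp_all
    ultimately have "X u * A u + Y u * B u = 0" by (simp add: algebra_simps)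
    then show "mu u = 0" unfolding mu_def by simp
  next
    fix a' b' assume h: "a' \<in> V" "b' \<in> V" "a' \<noteq> x" "b' \<noteq> x" "a' \<noteq> b'"
    show "tau x a' \<noteq> tau x b'" unfolding tau_def
      by (rule G3[OF fin' _ _ _ vV' uv[OF xV] uv[OF h(1)] uv[OF h(2)] h(3)[symmetric] h(4)[symmetric] h(5)])
         (use xV h in auto)
  next
    fix a1' b1' a2' b2' a3' b3'
    assume "pat1 x y V a1' b1'" "pat1 x y V a2' b2'" "pat1 x y V a3' b3'"
      "pat2 x y a1' b1' a2' b2'" "pat2 x y a1' b1' a3' b3'" "pat2 x y a2' b2' a3' b3'"
    then show "detD tau x y a1' b1' a2' b2' a3' b3' \<noteq> 0" unfolding tau_def
      by (intro G4[OF fin' vV' _ vV xV yV xy]) auto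
  qed (use xV yV xy in auto)
  have "mu x = 0" by (rule T.main_x[OF c1 c2 a1 b2 b1])
  then have "(X x * A x + Y x * B x) / (X x ^ 2 + Y x ^ 2) = 0" unfolding mu_def by simp
  then have "X x * A x + Y x * B x = 0" using Nnz[OF xV] divide_eq_0_iff by blast
  moreover have "ipK ?K q (rowv 2 ?V ?p {v, x}) = (A v - A x) * (X v - X x) + (B v - B x) * (Y v - Y x)"
    using iprow[of v x] xV uv[OF xV] by simp
  moreover have "A v = 0" "B v = 0" "X v = 0" "Y v = 0" unfolding A_def B_def X_def Y_def PX_def PY_def by simp_all
  ultimately show ?thesis by (simp add: algebra_simps)
qed

lemma tech_cycles:
  assumes finE: "finite E"
    and edg: "\<forall>e\<in>E. \<exists>a b. a \<in> \<Union>E \<and> b \<in> \<Union>E \<and> a \<noteq> b \<and> e = {a, b}"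
    and pp: "principal_partition 1 (\<Union>E) E P"
    and tx: "technicolour P x"
  shows "\<exists>cs1 cs2 a b. is_cycle cs1 \<and> set cs1 \<subseteq> \<Union>E \<and> cyc_edges cs1 \<subseteq> E \<and>
     is_cycle cs2 \<and> set cs2 \<subseteq> \<Union>E \<and> cyc_edges cs2 \<subseteq> E \<and>
     {x, a} \<in> cyc_edges cs1 \<and> {x, b} \<in> cyc_edges cs2 \<and> {x, b} \<notin> cyc_edges cs1"
proof -
  let ?V = "\<Union>E"
  define kk where "kk = card E - Rrank 1 ?V E"
  have ppU: "\<Union>P = E" and ppD: "\<forall>A\<in>P. \<forall>B\<in>P. A \<noteq> B \<longrightarrow> A \<inter> B = {}"
    and ppK: "{E - A | A. A \<in> P} = {D'. D' \<subseteq> E \<and> kfold_circuit 1 ?V D' (kk - 1)}"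
    using pp unfolding principal_partition_def kk_def Let_def by auto
  obtain B1 B2 e1 e2 where B: "B1 \<in> P" "B2 \<in> P" "B1 \<noteq> B2" "e1 \<in> B1" "x \<in> e1" "e2 \<in> B2" "x \<in> e2"
    using tx unfolding technicolour_def by blast
  have e1E: "e1 \<in> E" and e2E: "e2 \<in> E" using B ppU by blast+
  have cyc_of: "\<exists>Z. Rcircuit 1 ?V Z \<and> Z \<subseteq> E - Bi \<and> e \<in> Z" if "Bi \<in> P" "e \<in> E - Bi" for Bi e
  proof -
    have "E - Bi \<in> {E - A | A. A \<in> P}" using that(1) by blast
    then have "kfold_circuit 1 ?V (E - Bi) (kk - 1)" using ppK by blast
    then have "Rcyclic 1 ?V (E - Bi)" unfolding kfold_circuit_def by blast
    then have "E - Bi = \<Union>{C. C \<subseteq> E - Bi \<and> Rcircuit 1 ?V C}" unfolding Rcyclic_def .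
    then have "e \<in> \<Union>{C. C \<subseteq> E - Bi \<and> Rcircuit 1 ?V C}" using that(2) by blast
    then show ?thesis by blast
  qed
  have "e2 \<in> E - B1" using e2E B ppD by blast
  then obtain Z2 where Z2: "Rcircuit 1 ?V Z2" "Z2 \<subseteq> E - B1" "e2 \<in> Z2" using cyc_of[OF B(1)] by blast
  have "e1 \<in> E - B2" using e1E B ppD by blast
  then obtain Z1 where Z1: "Rcircuit 1 ?V Z1" "Z1 \<subseteq> E - B2" "e1 \<in> Z1" using cyc_of[OF B(2)] by blast
  have finV: "finite ?V"
  proof (rule finite_Union[OF finE])
    fix e assume "e \<in> E" then obtain a b where "e = {a, b}" using edg by blast
    then show "finite e" by simp
  qed
  have edgZ: "\<forall>e\<in>Z. \<exists>a b. a \<in> ?V \<and> b \<in> ?V \<and> a \<noteq> b \<and> e = {a, b}" if "Z \<subseteq> E" for Z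
    using edg that by blast
  obtain cs1 where cs1: "is_cycle cs1" "set cs1 \<subseteq> ?V" "cyc_edges cs1 = Z1"
    using circuit_cycle[OF finV edgZ Z1(1)] Z1(2) by blast
  obtain cs2 where cs2: "is_cycle cs2" "set cs2 \<subseteq> ?V" "cyc_edges cs2 = Z2"
    using circuit_cycle[OF finV edgZ Z2(1)] Z2(2) by blast
  obtain a1 a2 where e1ab: "e1 = {a1, a2}" using edg e1E by blast
  define a where "a = (if a1 = x then a2 else a1)"
  have e1x: "e1 = {x, a}" using e1ab B(5) unfolding a_def by auto
  obtain b1 b2 where e2ab: "e2 = {b1, b2}" using edg e2E by blast
  define b where "b = (if b1 = x then b2 else b1)"
  have e2x: "e2 = {x, b}" using e2ab B(7) unfolding b_def by auto
  have "e2 \<notin> Z1" using Z1(2) B(6) by blast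
  show ?thesis
    using cs1 cs2 Z1 Z2 e1x e2x \<open>e2 \<notin> Z1\<close> by blast
qed

theorem lemma4p6:
  fixes E :: "'a set set" and k :: nat and P Q :: "'a set set set" and x y v :: 'a
  assumes "finite E" and "\<forall>e\<in>E. card e = 2"
    and "k \<ge> 1"
    and "kfold_circuit 1 (\<Union> E) E k"
    and "principal_partition 1 (\<Union> E) E P"
    and "x \<noteq> y" and "technicolour P x" and "technicolour P y"
    and "v \<notin> \<Union> E"
    and "principal_partition 2 (insert v (\<Union> E)) (cone_edges E v) Q"
  shows "\<not> (\<exists>A\<in>Q. {v, x} \<in> A \<and> {v, y} \<in> A)"
proof
  assume "\<exists>A\<in>Q. {v, x} \<in> A \<and> {v, y} \<in> A"
  then obtain A where A: "A \<in> Q" "{v, x} \<in> A" "{v, y} \<in> A" by blast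
  note finE = assms(1) and pp1 = assms(5) and xy = assms(6) and tx = assms(7) and ty = assms(8)
    and vV = assms(9) and pp2 = assms(10)
  define V where "V = \<Union>E"
  define V' where "V' = insert v V"
  define C where "C = cone_edges E v"
  define C' where "C' = C - {{v, x}, {v, y}}"
  let ?p = "gen_p 2 V'"
  let ?K = "V' \<times> {..<2::nat}"
  have edg: "\<forall>e\<in>E. \<exists>a b. a \<in> \<Union>E \<and> b \<in> \<Union>E \<and> a \<noteq> b \<and> e = {a, b}"
  proof
    fix e assume e: "e \<in> E"
    then obtain a b where "e = {a, b}" "a \<noteq> b" using assms(2) card_2_iff by metis
    then show "\<exists>a b. a \<in> \<Union>E \<and> b \<in> \<Union>E \<and> a \<noteq> b \<and> e = {a, b}" using e by blast
  qed
  have edgV: "\<forall>e\<in>E. \<exists>a b. a \<in> V \<and> b \<in> V \<and> a \<noteq> b \<and> e = {a, b}" using edg unfolding V_def .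
  have finV: "finite V" unfolding V_def
  proof (rule finite_Union[OF finE])
    fix e assume "e \<in> E" then obtain a b where "e = {a, b}" using edg by blast
    then show "finite e" by simp
  qed
  have vV': "v \<notin> V" using vV unfolding V_def .
  have ppU: "\<Union>P = E" using pp1 unfolding principal_partition_def Let_def by auto
  have xV: "x \<in> V" using tx ppU unfolding technicolour_def V_def by blast
  have yV: "y \<in> V" using ty ppU unfolding technicolour_def V_def by blast
  obtain cs1 cs2 a b where cx: "is_cycle cs1" "set cs1 \<subseteq> V" "cyc_edges cs1 \<subseteq> E"
     "is_cycle cs2" "set cs2 \<subseteq> V" "cyc_edges cs2 \<subseteq> E"
     "{x, a} \<in> cyc_edges cs1" "{x, b} \<in> cyc_edges cs2" "{x, b} \<notin> cyc_edges cs1"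
    using tech_cycles[OF finE edg pp1 tx] unfolding V_def by blast
  obtain ds1 ds2 c d where cy: "is_cycle ds1" "set ds1 \<subseteq> V" "cyc_edges ds1 \<subseteq> E"
     "is_cycle ds2" "set ds2 \<subseteq> V" "cyc_edges ds2 \<subseteq> E"
     "{y, c} \<in> cyc_edges ds1" "{y, d} \<in> cyc_edges ds2" "{y, d} \<notin> cyc_edges ds1"
    using tech_cycles[OF finE edg pp1 ty] unfolding V_def by blast
  have Cdef: "C = E \<union> {{v, u} | u. u \<in> V}" unfolding C_def cone_edges_def V_def by simp
  have finC: "finite C" unfolding Cdef using finE finV by simp
  have finV': "finite V'" unfolding V'_def using finV by simp
  have C'sub: "C' \<subseteq> C" unfolding C'_def by blast
  have EC': "e \<in> C'" if "e \<in> E" for e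
  proof -
    have "e \<subseteq> V" using that unfolding V_def by blast
    then have "v \<notin> e" using vV' by blast
    then show ?thesis unfolding C'_def Cdef using that by blast
  qed
  have vC': "{v, u} \<in> C'" if "u \<in> V" "u \<noteq> x" "u \<noteq> y" for u
    unfolding C'_def Cdef using that by (auto simp: doubleton_eq_iff)
  have supp_row: "suppK ?K (rowv 2 V' ?p e)" for e
    unfolding suppK_def rowv_def by auto
  have finF: "finite (rowv 2 V' ?p ` C')" using finC C'sub finite_subset by blast
  have span_x: "rowv 2 V' ?p {v, x} \<in> fv.span (rowv 2 V' ?p ` C')"
  proof (rule dual_span)
    show "finite ?K" using finV' by simp
    show "finite (rowv 2 V' ?p ` C')" by (rule finF)
    show "\<forall>f\<in>rowv 2 V' ?p ` C'. suppK ?K f" using supp_row by blast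
    show "suppK ?K (rowv 2 V' ?p {v, x})" by (rule supp_row)
    fix q assume q: "\<forall>f\<in>rowv 2 V' ?p ` C'. ipK ?K q f = 0"
    show "ipK ?K q (rowv 2 V' ?p {v, x}) = 0"
      unfolding V'_def
    proof (rule kernel_x[OF finV vV' edgV xV yV xy _ _ cx])
      show "\<forall>e\<in>E. ipK (insert v V \<times> {..<2}) q (rowv 2 (insert v V) (gen_p 2 (insert v V)) e) = 0"
        using q EC' unfolding V'_def by blast
      show "\<forall>u\<in>V. u \<noteq> x \<longrightarrow> u \<noteq> y \<longrightarrow> ipK (insert v V \<times> {..<2}) q (rowv 2 (insert v V) (gen_p 2 (insert v V)) {v, u}) = 0"
        using q vC' unfolding V'_def by blast
    qed
  qed
  have span_y: "rowv 2 V' ?p {v, y} \<in> fv.span (rowv 2 V' ?p ` C')"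
  proof (rule dual_span)
    show "finite ?K" using finV' by simp
    show "finite (rowv 2 V' ?p ` C')" by (rule finF)
    show "\<forall>f\<in>rowv 2 V' ?p ` C'. suppK ?K f" using supp_row by blast
    show "suppK ?K (rowv 2 V' ?p {v, y})" by (rule supp_row)
    fix q assume q: "\<forall>f\<in>rowv 2 V' ?p ` C'. ipK ?K q f = 0"
    show "ipK ?K q (rowv 2 V' ?p {v, y}) = 0"
      unfolding V'_def
    proof (rule kernel_x[OF finV vV' edgV yV xV xy[symmetric] _ _ cy])
      show "\<forall>e\<in>E. ipK (insert v V \<times> {..<2}) q (rowv 2 (insert v V) (gen_p 2 (insert v V)) e) = 0"
        using q EC' unfolding V'_def by blast
      show "\<forall>u\<in>V. u \<noteq> y \<longrightarrow> u \<noteq> x \<longrightarrow> ipK (insert v V \<times> {..<2}) q (rowv 2 (insert v V) (gen_p 2 (insert v V)) {v, u}) = 0"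
        using q vC' unfolding V'_def by blast
    qed
  qed
  have allspan: "\<forall>e\<in>C. rowv 2 V' ?p e \<in> fv.span (rowv 2 V' ?p ` C')"
  proof
    fix e assume e: "e \<in> C"
    show "rowv 2 V' ?p e \<in> fv.span (rowv 2 V' ?p ` C')"
    proof (cases "e \<in> C'")
      case True then show ?thesis by (intro fv.span_base imageI)
    next
      case False
      then have "e = {v, x} \<or> e = {v, y}" using e unfolding C'_def by blast
      then show ?thesis using span_x span_y by blast
    qed
  qed
  have rk1: "Rrank 2 V' C \<le> Rrank 2 V' C'" by (rule Rrank_span[OF finC C'sub allspan])
  define k2 where "k2 = card C - Rrank 2 V' C"
  have ppQU: "\<Union>Q = C" and ppQK: "{C - A | A. A \<in> Q} = {D'. D' \<subseteq> C \<and> kfold_circuit 2 V' D' (k2 - 1)}"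
    using pp2 unfolding principal_partition_def Let_def k2_def C_def V'_def V_def by auto
  have AC: "A \<subseteq> C" using A(1) ppQU by blast
  have "C - A \<in> {C - A | A. A \<in> Q}" using A(1) by blast
  then have "kfold_circuit 2 V' (C - A) (k2 - 1)" using ppQK by blast
  then have kf: "Rrank 2 V' (C - A) + (k2 - 1) = card (C - A)" unfolding kfold_circuit_def by blast
  have finA: "finite A" using AC finC finite_subset by blast
  have cardCA: "card (C - A) = card C - card A" using AC finA by (simp add: card_Diff_subset)
  have neq: "{v, x} \<noteq> {v, y}" using xy by (auto simp: doubleton_eq_iff)
  have cardA2: "card (A - {{v, x}, {v, y}}) = card A - 2"
  proof -
    have "{{v, x}, {v, y}} \<subseteq> A" using A by blast
    moreover have "card {{v, x}, {v, y}} = 2" using neq by simp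
    ultimately show ?thesis using finA by (simp add: card_Diff_subset)
  qed
  have A2: "2 \<le> card A"
  proof -
    have "{{v, x}, {v, y}} \<subseteq> A" using A by blast
    then have "card {{v, x}, {v, y}} \<le> card A" using finA by (rule card_mono[rotated])
    then show ?thesis using neq by simp
  qed
  have "C' = (C - A) \<union> (A - {{v, x}, {v, y}})" unfolding C'_def using AC A(2) A(3) by auto
  then have rk2: "Rrank 2 V' C' \<le> Rrank 2 V' (C - A) + card (A - {{v, x}, {v, y}})"
    using Rrank_union_le[of "C - A" "A - {{v, x}, {v, y}}" 2 V'] finC finA by simp
  have rC: "Rrank 2 V' C \<le> card C" by (rule Rrank_le_card[OF finC])
  have cAC: "card A \<le> card C" using card_mono[OF finC AC] .
  show False
    using rk1 rk2 rC cAC kf cardCA cardA2 A2 unfolding k2_def by linarith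
qed

end
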